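(* Let $\mathbb{M}$ be a partial group. Then (i) $N(\mathbb{M})$ is a subgroup of $\mathbb{M}$; (ii) $Z(\mathbb{M})$ is an abelian subgroup of $\mathbb{M}$; and (iii) $\mathrm{Inn}(\mathbb{M})\cong N(\mathbb{M})/Z(\mathbb{M})$.
   Context: Partial groups are regarded as simplicial sets whose $n$-simplices are the words $[x_1|\dots|x_n]$ in the domain of the partial product (faces multiply adjacent letters or delete the first/last letter; degeneracies insert the unit); $\Pi[x_1|\dots|x_n]=[x_1\cdots x_n]$. A subgroup of $\mathbb{M}$ is a subset $H\subseteq\mathbb{M}_1$ such that every word in $H$ is a simplex, closed under products and inverses. For $\eta,x\in\mathbb{M}_1$ write ${}^{\eta}x=\eta x\eta^{-1}$ when $[\eta|x|\eta^{-1}]$ is a simplex. $N(\mathbb{M})$ is the set of $\eta\in\mathbb{M}_1$ such that (i) for every $x\in\mathbb{M}_1$, $[\eta|x|\eta^{-1}]\in\mathbb{M}$ and $x\mapsto{}^{\eta}x$ extends to an automorphism of $\mathbb{M}$; (ii) for every simplex $[x_1|\dots|x_n]$ and $0\le i\le n$, $\omega_i=[{}^{\eta}x_1|\dots|{}^{\eta}x_i|\eta|x_{i+1}|\dots|x_n]$ is a simplex and $\Pi(\omega_0)=\dots=\Pi(\omega_n)$. $Z(\mathbb{M})$ is the set of $\eta\in N(\mathbb{M})$ with ${}^{\eta}x=x$ for all $x\in\mathbb{M}_1$. An automorphism $\alpha$ of $\mathbb{M}$ (simplicial automorphism) is inner if there is a simplicial homotopy $F\colon\mathbb{M}\times\Delta[1]\to\mathbb{M}$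 from $\alpha$ to $\mathrm{Id}_{\mathbb{M}}$; $\mathrm{Inn}(\mathbb{M})$ is the group of inner automorphisms. *)

theory Defs
  imports "HOL-Algebra.Coset"
begin

record 'a partial_group =
  pg_carrier :: "'a set"
  pg_dom     :: "'a list set"
  pg_prod    :: "'a list \<Rightarrow> 'a"
  pg_inv     :: "'a \<Rightarrow> 'a"

definition pg_one :: "'a partial_group \<Rightarrow> 'a" where
  "pg_one M = pg_prod M []"

definition partial_group :: "'a partial_group \<Rightarrow> bool" where
  "partial_group M \<longleftrightarrow>
     pg_dom M \<subseteq> lists (pg_carrier M) \<and>
     [] \<in> pg_dom M \<and>
     (\<forall>x\<in>pg_carrier M. [x] \<in> pg_dom M) \<and>
     (\<forall>u v. u @ v \<in> pg_dom M \<longrightarrow> u \<in> pg_dom M \<and> v \<in> pg_dom M) \<and>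
     (\<forall>w\<in>pg_dom M. pg_prod M w \<in> pg_carrier M) \<and>
     (\<forall>x\<in>pg_carrier M. pg_prod M [x] = x) \<and>
     (\<forall>u v w. u @ v @ w \<in> pg_dom M \<longrightarrow>
        u @ [pg_prod M v] @ w \<in> pg_dom M \<and>
        pg_prod M (u @ v @ w) = pg_prod M (u @ [pg_prod M v] @ w)) \<and>
     (\<forall>x\<in>pg_carrier M. pg_inv M x \<in> pg_carrier M \<and> pg_inv M (pg_inv M x) = x) \<and>
     (\<forall>w\<in>pg_dom M. rev (map (pg_inv M) w) @ w \<in> pg_dom M \<and>
        pg_prod M (rev (map (pg_inv M) w) @ w) = pg_one M)"

definition simp :: "'a partial_group \<Rightarrow> nat \<Rightarrow> 'a list set" where
  "simp M n = {w \<in> pg_dom M. length w = n}"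

definition face :: "'a partial_group \<Rightarrow> nat \<Rightarrow> nat \<Rightarrow> 'a list \<Rightarrow> 'a list" where
  "face M n i w =
     (if i = 0 then tl w
      else if i = n then butlast w
      else take (i - 1) w @ [pg_prod M [w ! (i - 1), w ! i]] @ drop (i + 1) w)"

definition degen :: "'a partial_group \<Rightarrow> nat \<Rightarrow> nat \<Rightarrow> 'a list \<Rightarrow> 'a list" where
  "degen M n i w = take i w @ [pg_one M] @ drop i w"

definition simplicial_map :: "'a partial_group \<Rightarrow> (nat \<Rightarrow> 'a list \<Rightarrow> 'a list) \<Rightarrow> bool" where
  "simplicial_map M f \<longleftrightarrow>
     (\<forall>n. \<forall>w\<in>simp M n. f n w \<in> simp M n) \<and>
     (\<forall>n. \<forall>w\<in>simp M n. \<forall>i\<le>n. 0 < n \<longrightarrow>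
        f (n - 1) (face M n i w) = face M n i (f n w)) \<and>
     (\<forall>n. \<forall>w\<in>simp M n. \<forall>i\<le>n.
        f (Suc n) (degen M n i w) = degen M n i (f n w))"

definition simplicial_aut :: "'a partial_group \<Rightarrow> (nat \<Rightarrow> 'a list \<Rightarrow> 'a list) \<Rightarrow> bool" where
  "simplicial_aut M f \<longleftrightarrow> simplicial_map M f \<and>
     (\<exists>g. simplicial_map M g \<and>
        (\<forall>n. \<forall>w\<in>simp M n. g n (f n w) = w \<and> f n (g n w) = w))"

text \<open>The standard 1-simplex Delta[1]: an n-simplex is a monotone map [n] \<rightarrow> [1],
  encoded by the number k \<le> n+1 of vertices sent to 0.
  The constant map to 0 is k = n+1, the constant map to 1 is k = 0.\<close>
definition d1_face :: "nat \<Rightarrow> nat \<Rightarrow> nat" where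
  "d1_face i k = (if i < k then k - 1 else k)"

definition d1_degen :: "nat \<Rightarrow> nat \<Rightarrow> nat" where
  "d1_degen i k = (if i < k then k + 1 else k)"

text \<open>Simplicial homotopy F : M \<times> Delta[1] \<rightarrow> M from f (restriction to vertex 0)
  to g (restriction to vertex 1).\<close>
definition simplicial_homotopy ::
  "'a partial_group \<Rightarrow> (nat \<Rightarrow> 'a list \<Rightarrow> nat \<Rightarrow> 'a list)
     \<Rightarrow> (nat \<Rightarrow> 'a list \<Rightarrow> 'a list) \<Rightarrow> (nat \<Rightarrow> 'a list \<Rightarrow> 'a list) \<Rightarrow> bool" where
  "simplicial_homotopy M F f g \<longleftrightarrow>
     (\<forall>n. \<forall>w\<in>simp M n. \<forall>k\<le>Suc n. F n w k \<in> simp M n) \<and>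
     (\<forall>n. \<forall>w\<in>simp M n. \<forall>k\<le>Suc n. \<forall>i\<le>n. 0 < n \<longrightarrow>
        F (n - 1) (face M n i w) (d1_face i k) = face M n i (F n w k)) \<and>
     (\<forall>n. \<forall>w\<in>simp M n. \<forall>k\<le>Suc n. \<forall>i\<le>n.
        F (Suc n) (degen M n i w) (d1_degen i k) = degen M n i (F n w k)) \<and>
     (\<forall>n. \<forall>w\<in>simp M n. F n w (Suc n) = f n w \<and> F n w 0 = g n w)"

definition inner_aut :: "'a partial_group \<Rightarrow> (nat \<Rightarrow> 'a list \<Rightarrow> 'a list) \<Rightarrow> bool" where
  "inner_aut M f \<longleftrightarrow> simplicial_aut M f \<and>
     (\<exists>F. simplicial_homotopy M F f (\<lambda>n w. w))"

text \<open>Inn(M) as a group under composition; automorphisms are normalised to be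
  undefined off the simplices so that equality is equality of simplicial maps.\<close>
definition Inn :: "'a partial_group \<Rightarrow> (nat \<Rightarrow> 'a list \<Rightarrow> 'a list) monoid" where
  "Inn M = \<lparr> carrier = {f. inner_aut M f \<and> (\<forall>n w. w \<notin> simp M n \<longrightarrow> f n w = undefined)},
             mult = (\<lambda>f g. \<lambda>n w. if w \<in> simp M n then f n (g n w) else undefined),
             one = (\<lambda>n w. if w \<in> simp M n then w else undefined) \<rparr>"

definition pg_subgroup :: "'a partial_group \<Rightarrow> 'a set \<Rightarrow> bool" where
  "pg_subgroup M H \<longleftrightarrow> H \<subseteq> pg_carrier M \<and>
     lists H \<subseteq> pg_dom M \<and>
     (\<forall>w\<in>lists H. pg_prod M w \<in> H) \<and>
     (\<forall>x\<in>H. pg_inv M x \<in> H)"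

definition pg_conj :: "'a partial_group \<Rightarrow> 'a \<Rightarrow> 'a \<Rightarrow> 'a" where
  "pg_conj M \<eta> x = pg_prod M [\<eta>, x, pg_inv M \<eta>]"

definition pg_N :: "'a partial_group \<Rightarrow> 'a set" where
  "pg_N M = {\<eta> \<in> pg_carrier M.
     (\<forall>x\<in>pg_carrier M. [\<eta>, x, pg_inv M \<eta>] \<in> pg_dom M) \<and>
     (\<exists>f. simplicial_aut M f \<and> (\<forall>x\<in>pg_carrier M. f 1 [x] = [pg_conj M \<eta> x])) \<and>
     (\<forall>w\<in>pg_dom M. \<forall>i\<le>length w.
        map (pg_conj M \<eta>) (take i w) @ [\<eta>] @ drop i w \<in> pg_dom M \<and>
        pg_prod M (map (pg_conj M \<eta>) (take i w) @ [\<eta>] @ drop i w) = pg_prod M (\<eta> # w))}"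

definition pg_Z :: "'a partial_group \<Rightarrow> 'a set" where
  "pg_Z M = {\<eta> \<in> pg_N M. \<forall>x\<in>pg_carrier M. pg_conj M \<eta> x = x}"

definition N_group :: "'a partial_group \<Rightarrow> 'a monoid" where
  "N_group M = \<lparr> carrier = pg_N M, mult = (\<lambda>x y. pg_prod M [x, y]), one = pg_one M \<rparr>"

end

theory Submission
  imports Defs
begin

locale pgrp =
  fixes M :: "'a partial_group"
  assumes pg: "partial_group M"
begin

abbreviation "D \<equiv> pg_dom M"
abbreviation "C \<equiv> pg_carrier M"
abbreviation "P \<equiv> pg_prod M"
abbreviation "I \<equiv> pg_inv M"
abbreviation "e \<equiv> pg_one M"
definition iw :: "'a list \<Rightarrow> 'a list" where "iw w = rev (map I w)"

lemma ax1: "pg_dom M \<subseteq> lists (pg_carrier M)"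
  using pg unfolding partial_group_def by (elim conjE) assumption
lemma ax2: "[] \<in> pg_dom M"
  using pg unfolding partial_group_def by (elim conjE) assumption
lemma ax3: "\<forall>x\<in>pg_carrier M. [x] \<in> pg_dom M"
  using pg unfolding partial_group_def by (elim conjE) assumption
lemma ax4: "\<forall>u v. u @ v \<in> pg_dom M \<longrightarrow> u \<in> pg_dom M \<and> v \<in> pg_dom M"
  using pg unfolding partial_group_def by (elim conjE) assumption
lemma ax5: "\<forall>w\<in>pg_dom M. pg_prod M w \<in> pg_carrier M"
  using pg unfolding partial_group_def by (elim conjE) assumption
lemma ax6: "\<forall>x\<in>pg_carrier M. pg_prod M [x] = x"
  using pg unfolding partial_group_def by (elim conjE) assumption
lemma ax7: "\<forall>u v w. u @ v @ w \<in> pg_dom M \<longrightarrow>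
        u @ [pg_prod M v] @ w \<in> pg_dom M \<and>
        pg_prod M (u @ v @ w) = pg_prod M (u @ [pg_prod M v] @ w)"
  using pg unfolding partial_group_def by (elim conjE) assumption
lemma ax8: "\<forall>x\<in>pg_carrier M. pg_inv M x \<in> pg_carrier M \<and> pg_inv M (pg_inv M x) = x"
  using pg unfolding partial_group_def by (elim conjE) assumption
lemma ax9: "\<forall>w\<in>pg_dom M. rev (map (pg_inv M) w) @ w \<in> pg_dom M \<and>
        pg_prod M (rev (map (pg_inv M) w) @ w) = pg_one M"
  using pg unfolding partial_group_def by (elim conjE) assumption

lemma D_lists: "w \<in> D \<Longrightarrow> set w \<subseteq> C"
  using ax1 by blast
lemma nil_D[simp]: "[] \<in> D"
  using ax2 .
lemma single_D: "x \<in> C \<Longrightarrow> [x] \<in> D"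
  using ax3 by blast
lemma appD1: "u @ v \<in> D \<Longrightarrow> u \<in> D"
  using ax4 by blast
lemma appD2: "u @ v \<in> D \<Longrightarrow> v \<in> D"
  using ax4 by blast
lemma prod_C: "w \<in> D \<Longrightarrow> P w \<in> C"
  using ax5 by blast
lemma prod_single: "x \<in> C \<Longrightarrow> P [x] = x"
  using ax6 by blast
lemma coll_D: "u @ v @ w \<in> D \<Longrightarrow> u @ [P v] @ w \<in> D"
  using ax7 by blast
lemma coll_P: "u @ v @ w \<in> D \<Longrightarrow> P (u @ v @ w) = P (u @ [P v] @ w)"
  using ax7 by blast
lemma inv_C: "x \<in> C \<Longrightarrow> I x \<in> C"
  using ax8 by blast
lemma inv_inv[simp]: "x \<in> C \<Longrightarrow> I (I x) = x"
  using ax8 by blast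
lemma invw_D: "w \<in> D \<Longrightarrow> iw w @ w \<in> D"
  using ax9 unfolding iw_def by blast
lemma invw_P: "w \<in> D \<Longrightarrow> P (iw w @ w) = e"
  using ax9 unfolding iw_def by blast

lemma e_C: "e \<in> C"
  using prod_C[OF nil_D] by (simp add: pg_one_def)

lemma mid_D: "u @ v @ w \<in> D \<Longrightarrow> v \<in> D"
  using appD1 appD2 by blast

lemma iw_D: "w \<in> D \<Longrightarrow> iw w \<in> D"
  using invw_D appD1 by blast

lemma iw_iw: "set w \<subseteq> C \<Longrightarrow> iw (iw w) = w"
  unfolding iw_def by (induction w) (auto simp: rev_map)

lemma iw_simps[simp]: "iw [] = []" "iw (x # w) = iw w @ [I x]" "iw (u @ v) = iw v @ iw u"
  unfolding iw_def by auto

lemma e_left: "x \<in> C \<Longrightarrow> [e, x] \<in> D \<and> P [e, x] = x"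
proof -
  assume x: "x \<in> C"
  have "[] @ [] @ [x] \<in> D" using single_D[OF x] by simp
  from coll_D[OF this] coll_P[OF this] show ?thesis
    by (simp add: pg_one_def prod_single x)
qed

lemma e_right: "x \<in> C \<Longrightarrow> [x, e] \<in> D \<and> P [x, e] = x"
proof -
  assume x: "x \<in> C"
  have "[x] @ [] @ [] \<in> D" using single_D[OF x] by simp
  from coll_D[OF this] coll_P[OF this] show ?thesis
    by (simp add: pg_one_def prod_single x)
qed

lemma ins_e: "u @ w \<in> D \<Longrightarrow> u @ [e] @ w \<in> D \<and> P (u @ [e] @ w) = P (u @ w)"
proof -
  assume "u @ w \<in> D"
  hence "u @ [] @ w \<in> D" by simp
  from coll_D[OF this] coll_P[OF this] show ?thesis by (simp add: pg_one_def)
qed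

lemma inv_l: "x \<in> C \<Longrightarrow> [I x, x] \<in> D \<and> P [I x, x] = e"
  using invw_D[OF single_D] invw_P[OF single_D] by simp

lemma inv_r: "x \<in> C \<Longrightarrow> [x, I x] \<in> D \<and> P [x, I x] = e"
  using inv_l[OF inv_C] by simp

lemma cons_P: "x # w \<in> D \<Longrightarrow> [x, P w] \<in> D \<and> P (x # w) = P [x, P w]"
proof -
  assume "x # w \<in> D"
  hence "[x] @ w @ [] \<in> D" by simp
  from coll_D[OF this] coll_P[OF this] show ?thesis by simp
qed

lemma pair_assoc: "[a, b, c] \<in> D \<Longrightarrow> [P [a,b], c] \<in> D \<and> [a, P [b, c]] \<in> D \<and>
   P [P [a,b], c] = P [a,b,c] \<and> P [a, P [b,c]] = P [a,b,c]"
proof -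
  assume h: "[a, b, c] \<in> D"
  have 1: "[] @ [a,b] @ [c] \<in> D" using h by simp
  have 2: "[a] @ [b,c] @ [] \<in> D" using h by simp
  from coll_D[OF 1] coll_P[OF 1] coll_D[OF 2] coll_P[OF 2] show ?thesis by simp
qed

lemma pair_C: "[a, b] \<in> D \<Longrightarrow> a \<in> C \<and> b \<in> C"
  using D_lists[of "[a,b]"] by auto

lemma left_cancel: "[a, b] \<in> D \<Longrightarrow> [I a, a, b] \<in> D \<and> [I a, P [a, b]] \<in> D \<and> P [I a, P [a,b]] = b"
proof -
  assume h: "[a, b] \<in> D"
  have ab: "a \<in> C" "b \<in> C" using pair_C[OF h] by auto
  have "iw [a,b] @ [a,b] \<in> D" using invw_D[OF h] .
  hence "[I b] @ [I a, a, b] \<in> D" by simp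
  hence 1: "[I a, a, b] \<in> D" by (rule appD2)
  from pair_assoc[OF 1] have "[I a, P [a, b]] \<in> D" "P [I a, P [a,b]] = P [I a, a, b]"
     "P [I a, a, b] = P [P [I a, a], b]" by auto
  moreover have "P [I a, a] = e" using inv_l ab by auto
  ultimately show ?thesis using 1 e_left ab by auto
qed

lemma right_cancel: "[a, b] \<in> D \<Longrightarrow> [a, b, I b] \<in> D \<and> [P [a, b], I b] \<in> D \<and> P [P [a,b], I b] = a"
proof -
  assume h: "[a, b] \<in> D"
  have ab: "a \<in> C" "b \<in> C" using pair_C[OF h] by auto
  have "iw [a,b] @ [a,b] \<in> D" using invw_D[OF h] .
  hence "[I b, I a] @ [a, b] \<in> D" by simp
  hence h2: "[I b, I a] \<in> D" by (rule appD1)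
  have "iw [I b, I a] @ [I b, I a] \<in> D" using invw_D[OF h2] .
  hence "[a, b, I b] @ [I a] \<in> D" using ab by simp
  hence 1: "[a, b, I b] \<in> D" by (rule appD1)
  from pair_assoc[OF 1] have "[P [a, b], I b] \<in> D" "P [P [a,b], I b] = P [a, b, I b]"
     "P [a, b, I b] = P [a, P [b, I b]]" by auto
  moreover have "P [b, I b] = e" using inv_r ab by auto
  ultimately show ?thesis using 1 e_right ab by auto
qed

lemma inv_unique: "[a, b] \<in> D \<Longrightarrow> P [a, b] = e \<Longrightarrow> b = I a \<and> a = I b"
proof -
  assume h: "[a, b] \<in> D" and p: "P [a, b] = e"
  have ab: "a \<in> C" "b \<in> C" using pair_C[OF h] by auto
  have "P [I a, P [a,b]] = b" using left_cancel[OF h] by blast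
  hence "P [I a, e] = b" by (simp only: p)
  moreover have "P [I a, e] = I a" using e_right[OF inv_C[OF ab(1)]] by blast
  ultimately have 1: "b = I a" by simp
  have "P [P [a,b], I b] = a" using right_cancel[OF h] by blast
  hence "P [e, I b] = a" by (simp only: p)
  moreover have "P [e, I b] = I b" using e_left[OF inv_C[OF ab(2)]] by blast
  ultimately have "a = I b" by simp
  with 1 show ?thesis by simp
qed

lemma iw_P: "w \<in> D \<Longrightarrow> P (iw w) = I (P w)"
proof -
  assume h: "w \<in> D"
  have 0: "[] @ iw w @ w \<in> D" using invw_D[OF h] by (simp only: append_Nil)
  have 1: "[P (iw w)] @ w @ [] \<in> D"  using coll_D[OF 0] by (simp only: append_Nil append_Nil2)
  have 2: "P (iw w @ w) = P ([P (iw w)] @ w)" using coll_P[OF 0] by (simp only: append_Nil)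
  have 3: "[P (iw w), P w] \<in> D" using coll_D[OF 1] by (simp only: append_Nil2 append_Cons append_Nil)
  have 4: "P ([P (iw w)] @ w) = P [P (iw w), P w]" using coll_P[OF 1] by (simp only: append_Nil2 append_Cons append_Nil)
  have "P [P (iw w), P w] = e" using 2 4 invw_P[OF h] by simp
  from inv_unique[OF 3 this] show ?thesis by blast
qed

lemma iw_lists: "set w \<subseteq> C \<Longrightarrow> set (iw w) \<subseteq> C"
  unfolding iw_def using inv_C by auto


lemma simpD: "w \<in> simp M n \<Longrightarrow> w \<in> D \<and> length w = n"
  unfolding simp_def by auto
lemma simpI: "w \<in> D \<Longrightarrow> length w = n \<Longrightarrow> w \<in> simp M n"
  unfolding simp_def by auto

lemma split2: "Suc j < length w \<Longrightarrow> w = take j w @ [w!j, w!(Suc j)] @ drop (Suc (Suc j)) w"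
proof -
  assume h: "Suc j < length w"
  have "drop j w = w!j # drop (Suc j) w" using h by (simp add: Cons_nth_drop_Suc)
  also have "drop (Suc j) w = w!(Suc j) # drop (Suc (Suc j)) w" using h by (simp add: Cons_nth_drop_Suc)
  finally have "drop j w = [w!j, w!(Suc j)] @ drop (Suc (Suc j)) w" by simp
  thus ?thesis by (metis append_take_drop_id)
qed

lemma face_mid: "0 < i \<Longrightarrow> i < n \<Longrightarrow> length w = n \<Longrightarrow>
  face M n i w = take (i - 1) w @ [P [w!(i-1), w!(Suc (i-1))]] @ drop (Suc (Suc (i - 1))) w"
  unfolding face_def by simp

lemma face_simp: "w \<in> simp M n \<Longrightarrow> 0 < n \<Longrightarrow> i \<le> n \<Longrightarrow> face M n i w \<in> simp M (n - 1)"
proof -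
  assume w: "w \<in> simp M n" and n: "0 < n" and i: "i \<le> n"
  have wD: "w \<in> D" and lw: "length w = n" using simpD[OF w] by auto
  show ?thesis
  proof (cases "i = 0")
    case True
    have "w = [hd w] @ tl w" using lw n by (cases w) auto
    hence "tl w \<in> D" using wD appD2 by metis
    thus ?thesis using True lw unfolding face_def by (auto intro: simpI)
  next
    case False
    show ?thesis
    proof (cases "i = n")
      case True
      have "w = butlast w @ [last w]" using lw n by (cases w rule: rev_cases) auto
      hence "butlast w \<in> D" using wD appD1 by metis
      thus ?thesis using True False lw unfolding face_def by (auto intro: simpI)
    next
      case False2: False
      have "Suc (i - 1) < length w" using False False2 i lw by auto
      hence "take (i - 1) w @ [w!(i-1), w!(Suc (i-1))] @ drop (Suc (Suc (i - 1))) w \<in> D"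
        using split2 wD by metis
      hence "take (i - 1) w @ [P [w!(i-1), w!(Suc (i-1))]] @ drop (Suc (Suc (i - 1))) w \<in> D"
        by (rule coll_D)
      moreover have "length (take (i - 1) w @ [P [w!(i-1), w!(Suc (i-1))]] @ drop (Suc (Suc (i - 1))) w) = n - 1"
        using False False2 i lw by auto
      ultimately show ?thesis using face_mid[of i n w] False False2 i lw by (auto intro: simpI)
    qed
  qed
qed

lemma face_mid_P: "w \<in> simp M n \<Longrightarrow> 0 < i \<Longrightarrow> i < n \<Longrightarrow> P (face M n i w) = P w"
proof -
  assume w: "w \<in> simp M n" and i: "0 < i" "i < n"
  have wD: "w \<in> D" and lw: "length w = n" using simpD[OF w] by auto
  have "Suc (i - 1) < length w" using i lw by auto
  hence eq: "w = take (i - 1) w @ [w!(i-1), w!(Suc (i-1))] @ drop (Suc (Suc (i - 1))) w"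
    using split2 by metis
  hence "take (i - 1) w @ [w!(i-1), w!(Suc (i-1))] @ drop (Suc (Suc (i - 1))) w \<in> D"
    using wD by metis
  from coll_P[OF this] eq face_mid[OF i lw] show ?thesis by metis
qed

lemma length_face: "length w = n \<Longrightarrow> 0 < n \<Longrightarrow> i \<le> n \<Longrightarrow> length (face M n i w) = n - 1"
  unfolding face_def by auto

lemma nth_face: "length w = n \<Longrightarrow> 0 < n \<Longrightarrow> i \<le> n \<Longrightarrow> j < n - 1 \<Longrightarrow>
  face M n i w ! j = (if i = 0 then w!(Suc j) else if i = n then w!j
     else if j < i - 1 then w!j else if j = i - 1 then P [w!(i-1), w!i] else w!(Suc j))"
  unfolding face_def by (auto simp: nth_append nth_tl nth_butlast min_def)

lemma degen_simp: "w \<in> simp M n \<Longrightarrow> i \<le> n \<Longrightarrow> degen M n i w \<in> simp M (Suc n)"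
proof -
  assume w: "w \<in> simp M n" and i: "i \<le> n"
  have wD: "w \<in> D" and lw: "length w = n" using simpD[OF w] by auto
  have "take i w @ drop i w \<in> D" using wD by simp
  hence "take i w @ [e] @ drop i w \<in> D" using ins_e by blast
  thus ?thesis unfolding degen_def using lw i by (auto intro: simpI)
qed

lemma length_degen: "length w = n \<Longrightarrow> i \<le> n \<Longrightarrow> length (degen M n i w) = Suc n"
  unfolding degen_def by auto

lemma nth_degen: "length w = n \<Longrightarrow> i \<le> n \<Longrightarrow> j < Suc n \<Longrightarrow>
  degen M n i w ! j = (if j < i then w!j else if j = i then e else w!(j - 1))"
  unfolding degen_def by (auto simp: nth_append min_def)

lemma simp0: "w \<in> simp M 0 \<longleftrightarrow> w = []"
  unfolding simp_def by auto

lemma simp1: "w \<in> simp M (Suc 0) \<Longrightarrow> w = [hd w] \<and> hd w \<in> C"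
proof -
  assume w: "w \<in> simp M (Suc 0)"
  then obtain x where x: "w = [x]" unfolding simp_def by (auto simp: length_Suc_conv)
  with w have "x \<in> C" using simpD D_lists by fastforce
  with x show ?thesis by simp
qed

lemma single_simp: "x \<in> C \<Longrightarrow> [x] \<in> simp M (Suc 0)"
  using single_D by (auto intro: simpI)


subsection \<open>Spine lemmas\<close>

definition sa :: "(nat \<Rightarrow> 'a list \<Rightarrow> 'a list) \<Rightarrow> 'a \<Rightarrow> 'a" where
  "sa f x = hd (f (Suc 0) [x])"

lemma sm_simp: "simplicial_map M f \<Longrightarrow> w \<in> simp M n \<Longrightarrow> f n w \<in> simp M n"
  unfolding simplicial_map_def by blast
lemma sm_face: "simplicial_map M f \<Longrightarrow> w \<in> simp M n \<Longrightarrow> i \<le> n \<Longrightarrow> 0 < n \<Longrightarrow>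
   f (n - 1) (face M n i w) = face M n i (f n w)"
  unfolding simplicial_map_def by blast
lemma sm_degen: "simplicial_map M f \<Longrightarrow> w \<in> simp M n \<Longrightarrow> i \<le> n \<Longrightarrow>
   f (Suc n) (degen M n i w) = degen M n i (f n w)"
  unfolding simplicial_map_def by blast

lemma sa_single: "simplicial_map M f \<Longrightarrow> x \<in> C \<Longrightarrow> f (Suc 0) [x] = [sa f x] \<and> sa f x \<in> C"
  using simp1[OF sm_simp[OF _ single_simp]] unfolding sa_def by metis

lemma spine: "simplicial_map M f \<Longrightarrow> w \<in> simp M n \<Longrightarrow> f n w = map (sa f) w"
proof (induction n arbitrary: w rule: less_induct)
  case (less n)
  note f = less.prems(1) and w = less.prems(2)
  have wD: "w \<in> D" and lw: "length w = n" using simpD[OF w] by auto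
  have v: "f n w \<in> simp M n" using sm_simp[OF f w] .
  have lv: "length (f n w) = n" using simpD[OF v] by auto
  consider "n = 0" | "n = Suc 0" | m where "n = Suc (Suc m)" by (cases n; cases "n - 1") auto
  then show ?case
  proof cases
    case 1 thus ?thesis using lw lv by simp
  next
    case 2
    then obtain x where x: "w = [x]" using lw by (auto simp: length_Suc_conv)
    have "x \<in> C" using D_lists[OF wD] x by auto
    thus ?thesis using sa_single[OF f] x 2 by simp
  next
    case (3 m)
    have n0: "0 < n" using 3 by simp
    have IH: "\<And>u. u \<in> simp M (n - 1) \<Longrightarrow> f (n - 1) u = map (sa f) u"
      using less.IH f n0 by auto
    have t: "face M n 0 w = tl w" unfolding face_def by simp
    have b: "face M n n w = butlast w" unfolding face_def using n0 by simp
    have t2: "face M n 0 (f n w) = tl (f n w)" unfolding face_def by simp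
    have b2: "face M n n (f n w) = butlast (f n w)" unfolding face_def using n0 by simp
    have T: "tl (f n w) = map (sa f) (tl w)"
      using sm_face[OF f w _ n0, of 0] IH[OF face_simp[OF w n0, of 0]] t t2 by simp
    have B: "butlast (f n w) = map (sa f) (butlast w)"
      using sm_face[OF f w _ n0, of n] IH[OF face_simp[OF w n0, of n]] b b2 by simp
    show ?thesis
    proof (rule nth_equalityI)
      show "length (f n w) = length (map (sa f) w)" using lv lw by simp
    next
      fix j assume j: "j < length (f n w)"
      show "f n w ! j = map (sa f) w ! j"
      proof (cases j)
        case 0
        have "f n w ! 0 = butlast (f n w) ! 0" using lv 3 by (simp add: nth_butlast)
        also have "\<dots> = map (sa f) (butlast w) ! 0" using B by simp
        also have "\<dots> = map (sa f) w ! 0" using lw 3 by (simp add: nth_butlast)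
        finally show ?thesis using 0 by simp
      next
        case (Suc j')
        have "f n w ! j = tl (f n w) ! j'" using Suc j by (simp add: nth_tl)
        also have "\<dots> = map (sa f) (tl w) ! j'" using T by simp
        also have "\<dots> = map (sa f) w ! j" using Suc j lw lv by (simp add: nth_tl)
        finally show ?thesis .
      qed
    qed
  qed
qed

definition kk :: "nat \<Rightarrow> nat \<Rightarrow> nat" where
  "kk k j = (if Suc j < k then 2 else if Suc j = k then 1 else 0)"

lemma sh_all: "simplicial_homotopy M F f g \<Longrightarrow>
     (\<forall>n. \<forall>w\<in>simp M n. \<forall>k\<le>Suc n. F n w k \<in> simp M n) \<and>
     (\<forall>n. \<forall>w\<in>simp M n. \<forall>k\<le>Suc n. \<forall>i\<le>n. 0 < n \<longrightarrow>
        F (n - 1) (face M n i w) (d1_face i k) = face M n i (F n w k)) \<and>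
     (\<forall>n. \<forall>w\<in>simp M n. \<forall>k\<le>Suc n. \<forall>i\<le>n.
        F (Suc n) (degen M n i w) (d1_degen i k) = degen M n i (F n w k)) \<and>
     (\<forall>n. \<forall>w\<in>simp M n. F n w (Suc n) = f n w \<and> F n w 0 = g n w)"
  unfolding simplicial_homotopy_def by assumption

lemma sh_simp: "simplicial_homotopy M F f g \<Longrightarrow> w \<in> simp M n \<Longrightarrow> k \<le> Suc n \<Longrightarrow> F n w k \<in> simp M n"
proof -
  assume h: "simplicial_homotopy M F f g" "w \<in> simp M n" "k \<le> Suc n"
  have "\<forall>n. \<forall>w\<in>simp M n. \<forall>k\<le>Suc n. F n w k \<in> simp M n" using sh_all[OF h(1)] by (rule conjunct1)
  thus ?thesis using h(2,3) by simp
qed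
lemma sh_face: "simplicial_homotopy M F f g \<Longrightarrow> w \<in> simp M n \<Longrightarrow> k \<le> Suc n \<Longrightarrow> i \<le> n \<Longrightarrow> 0 < n \<Longrightarrow>
   F (n - 1) (face M n i w) (d1_face i k) = face M n i (F n w k)"
proof -
  assume h: "simplicial_homotopy M F f g" "w \<in> simp M n" "k \<le> Suc n" "i \<le> n" "0 < n"
  have "\<forall>n. \<forall>w\<in>simp M n. \<forall>k\<le>Suc n. \<forall>i\<le>n. 0 < n \<longrightarrow>
        F (n - 1) (face M n i w) (d1_face i k) = face M n i (F n w k)" using sh_all[OF h(1)] by (elim conjE)
  thus ?thesis using h(2-5) by simp
qed
lemma sh_degen: "simplicial_homotopy M F f g \<Longrightarrow> w \<in> simp M n \<Longrightarrow> k \<le> Suc n \<Longrightarrow> i \<le> n \<Longrightarrow>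
   F (Suc n) (degen M n i w) (d1_degen i k) = degen M n i (F n w k)"
proof -
  assume h: "simplicial_homotopy M F f g" "w \<in> simp M n" "k \<le> Suc n" "i \<le> n"
  have "\<forall>n. \<forall>w\<in>simp M n. \<forall>k\<le>Suc n. \<forall>i\<le>n.
        F (Suc n) (degen M n i w) (d1_degen i k) = degen M n i (F n w k)" using sh_all[OF h(1)] by (elim conjE)
  thus ?thesis using h(2-4) by simp
qed
lemma sh_ends: "simplicial_homotopy M F f g \<Longrightarrow> w \<in> simp M n \<Longrightarrow> F n w (Suc n) = f n w \<and> F n w 0 = g n w"
proof -
  assume h: "simplicial_homotopy M F f g" "w \<in> simp M n"
  have "\<forall>n. \<forall>w\<in>simp M n. F n w (Suc n) = f n w \<and> F n w 0 = g n w" using sh_all[OF h(1)] by (elim conjE)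
  thus ?thesis using h(2) by simp
qed

lemma hspine: "simplicial_homotopy M F f g \<Longrightarrow> w \<in> simp M n \<Longrightarrow> k \<le> Suc n \<Longrightarrow> j < n \<Longrightarrow>
   F n w k ! j = hd (F (Suc 0) [w!j] (kk k j))"
proof (induction n arbitrary: w k j rule: less_induct)
  case (less n)
  note F = less.prems(1) and w = less.prems(2) and k = less.prems(3) and j = less.prems(4)
  have wD: "w \<in> D" and lw: "length w = n" using simpD[OF w] by auto
  have v: "F n w k \<in> simp M n" using sh_simp[OF F w k] .
  have lv: "length (F n w k) = n" using simpD[OF v] by auto
  consider "n = Suc 0" | m where "n = Suc (Suc m)" using j by (cases n; cases "n - 1") auto
  then show ?case
  proof cases
    case 1
    then obtain x where x: "w = [x]" using lw by (auto simp: length_Suc_conv)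
    have "kk k j = k" using k j 1 unfolding kk_def by auto
    moreover have "F n w k = [hd (F n w k)]" using simp1 v 1 by metis
    ultimately show ?thesis using x j 1 by (metis less_Suc0 nth_Cons_0)
  next
    case (2 m)
    note 3 = 2
    have n0: "0 < n" using 3 by simp
    have IH: "\<And>u k' j'. u \<in> simp M (n - 1) \<Longrightarrow> k' \<le> n \<Longrightarrow> j' < n - 1 \<Longrightarrow>
       F (n - 1) u k' ! j' = hd (F (Suc 0) [u!j'] (kk k' j'))"
    proof -
      fix u k' j' assume "u \<in> simp M (n - 1)" "k' \<le> n" "j' < n - 1"
      moreover have "Suc (n - 1) = n" using n0 by simp
      ultimately show "F (n - 1) u k' ! j' = hd (F (Suc 0) [u!j'] (kk k' j'))"
        using less.IH[of "n - 1" u k' j', OF _ F] n0 by simp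
    qed
    show ?thesis
    proof (cases "j < n - 1")
      case True
      have b: "face M n n w = butlast w" unfolding face_def using n0 by simp
      have b2: "face M n n (F n w k) = butlast (F n w k)" unfolding face_def using n0 by simp
      have dk: "d1_face n k \<le> n" using k unfolding d1_face_def by auto
      have "F n w k ! j = butlast (F n w k) ! j" using True lv by (simp add: nth_butlast)
      also have "\<dots> = F (n - 1) (butlast w) (d1_face n k) ! j"
        using sh_face[OF F w k _ n0, of n] b b2 by simp
      also have "\<dots> = hd (F (Suc 0) [butlast w ! j] (kk (d1_face n k) j))"
        using IH[OF face_simp[OF w n0, of n, unfolded b] dk True] by simp
      also have "butlast w ! j = w ! j" using True lw by (simp add: nth_butlast)
      also have "kk (d1_face n k) j = kk k j" using True k unfolding kk_def d1_face_def by auto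
      finally show ?thesis .
    next
      case False
      hence jn: "j = n - 1" "0 < j" using j 3 by auto
      have t: "face M n 0 w = tl w" unfolding face_def by simp
      have t2: "face M n 0 (F n w k) = tl (F n w k)" unfolding face_def by simp
      have dk: "d1_face 0 k \<le> n" using k unfolding d1_face_def by auto
      have jj: "j - 1 < n - 1" using jn 3 by auto
      have "F n w k ! j = tl (F n w k) ! (j - 1)" using jn lv by (simp add: nth_tl Suc_diff_Suc)
      also have "\<dots> = F (n - 1) (tl w) (d1_face 0 k) ! (j - 1)"
        using sh_face[OF F w k _ n0, of 0] t t2 by simp
      also have "\<dots> = hd (F (Suc 0) [tl w ! (j - 1)] (kk (d1_face 0 k) (j - 1)))"
        using IH[OF face_simp[OF w n0, of 0, unfolded t] dk jj] by simp
      also have "tl w ! (j - 1) = w ! j" using jn lw by (simp add: nth_tl Suc_diff_Suc)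
      also have "kk (d1_face 0 k) (j - 1) = kk k j" using jn k unfolding kk_def d1_face_def by auto
      finally show ?thesis .
    qed
  qed
qed


lemma sm_nil: "simplicial_map M f \<Longrightarrow> f 0 [] = []"
  using sm_simp[of f "[]" 0] simp0 by simp

lemma sa_e: "simplicial_map M f \<Longrightarrow> sa f e = e"
proof -
  assume f: "simplicial_map M f"
  have "f (Suc 0) (degen M 0 0 []) = degen M 0 0 (f 0 [])"
    using sm_degen[OF f, of "[]" 0 0] simp0 by simp
  hence "f (Suc 0) [e] = [e]" using sm_nil[OF f] unfolding degen_def by simp
  thus ?thesis unfolding sa_def by simp
qed

lemma face21: "face M 2 1 [a, b] = [P [a, b]]"
  unfolding face_def by simp

lemma sa_mult: "simplicial_map M f \<Longrightarrow> [a, b] \<in> D \<Longrightarrow>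
   [sa f a, sa f b] \<in> D \<and> sa f (P [a, b]) = P [sa f a, sa f b]"
proof -
  assume f: "simplicial_map M f" and ab: "[a, b] \<in> D"
  have w: "[a, b] \<in> simp M 2" using ab by (auto intro: simpI)
  have sp: "f 2 [a, b] = [sa f a, sa f b]" using spine[OF f w] by simp
  have 1: "[sa f a, sa f b] \<in> D" using sm_simp[OF f w] sp simpD by metis
  have "f (2 - 1) (face M 2 1 [a, b]) = face M 2 1 (f 2 [a, b])"
    using sm_face[OF f w, of 1] by simp
  hence "f (Suc 0) [P [a, b]] = [P [sa f a, sa f b]]" using sp face21 by simp
  thus ?thesis using 1 unfolding sa_def by simp
qed

lemma map_sa_D: "simplicial_map M f \<Longrightarrow> w \<in> D \<Longrightarrow> map (sa f) w \<in> D"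
proof -
  assume f: "simplicial_map M f" and w: "w \<in> D"
  have ws: "w \<in> simp M (length w)" using w by (auto intro: simpI)
  show ?thesis using sm_simp[OF f ws] spine[OF f ws] simpD by metis
qed

lemma sa_prod: "simplicial_map M f \<Longrightarrow> w \<in> D \<Longrightarrow> sa f (P w) = P (map (sa f) w)"
proof (induction w)
  case Nil thus ?case using sa_e by (simp add: pg_one_def)
next
  case (Cons x w)
  have f: "simplicial_map M f" using Cons.prems(1) .
  have xw: "x # w \<in> D" using Cons.prems(2) .
  have wD: "w \<in> D" using xw appD2[of "[x]" w] by simp
  have c1: "[x, P w] \<in> D" "P (x # w) = P [x, P w]" using cons_P[OF xw] by blast+
  have m: "map (sa f) (x # w) \<in> D" using map_sa_D[OF f xw] .
  have m': "sa f x # map (sa f) w \<in> D" using m by (simp only: list.map)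
  have c2: "P (map (sa f) (x # w)) = P [sa f x, P (map (sa f) w)]"
    unfolding list.map by (rule conjunct2[OF cons_P[OF m']])
  have "sa f (P (x # w)) = sa f (P [x, P w])" using c1(2) by (rule arg_cong)
  also have "\<dots> = P [sa f x, sa f (P w)]" using sa_mult[OF f c1(1)] by (elim conjE)
  also have "sa f (P w) = P (map (sa f) w)" using Cons.IH[OF f wD] .
  also have "P [sa f x, P (map (sa f) w)] = P (map (sa f) (x # w))" using c2 by (rule sym)
  finally show ?case .
qed

lemma sa_C: "simplicial_map M f \<Longrightarrow> x \<in> C \<Longrightarrow> sa f x \<in> C"
  using sa_single by metis

lemma sa_inv: "simplicial_map M f \<Longrightarrow> x \<in> C \<Longrightarrow> sa f (I x) = I (sa f x)"
proof -
  assume f: "simplicial_map M f" and x: "x \<in> C"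
  have 1: "[x, I x] \<in> D" "P [x, I x] = e" using inv_r[OF x] by auto
  have 2: "[sa f x, sa f (I x)] \<in> D" "P [sa f x, sa f (I x)] = e"
    using sa_mult[OF f 1(1)] 1(2) sa_e[OF f] by auto
  show ?thesis using conjunct1[OF inv_unique[OF 2]] .
qed

lemma saut_map: "simplicial_aut M f \<Longrightarrow> simplicial_map M f"
  unfolding simplicial_aut_def by (elim conjE)

subsection \<open>Recognising elements of N\<close>

definition om :: "('a \<Rightarrow> 'a) \<Rightarrow> 'a \<Rightarrow> 'a list \<Rightarrow> nat \<Rightarrow> 'a list" where
  "om a \<eta> w i = map a (take i w) @ [\<eta>] @ drop i w"

lemma om0[simp]: "om a \<eta> w 0 = \<eta> # w"
  unfolding om_def by simp

lemma N_unfold: "\<eta> \<in> pg_N M \<longleftrightarrow> \<eta> \<in> C \<and>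
     (\<forall>x\<in>C. [\<eta>, x, I \<eta>] \<in> D) \<and>
     (\<exists>f. simplicial_aut M f \<and> (\<forall>x\<in>C. f (Suc 0) [x] = [pg_conj M \<eta> x])) \<and>
     (\<forall>w\<in>D. \<forall>i\<le>length w. om (pg_conj M \<eta>) \<eta> w i \<in> D \<and> P (om (pg_conj M \<eta>) \<eta> w i) = P (\<eta> # w))"
  unfolding pg_N_def om_def by simp

lemma recog:
  assumes al: "simplicial_aut M \<alpha>" and eta: "\<eta> \<in> C"
    and om: "\<And>w i. w \<in> D \<Longrightarrow> i \<le> length w \<Longrightarrow>
        om (sa \<alpha>) \<eta> w i \<in> D \<and> P (om (sa \<alpha>) \<eta> w i) = P (\<eta> # w)"
  shows "\<eta> \<in> pg_N M \<and> (\<forall>x\<in>C. pg_conj M \<eta> x = sa \<alpha> x)"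
proof -
  have f: "simplicial_map M \<alpha>" using saut_map[OF al] .
  define a where "a = sa \<alpha>"
  have ieta: "I \<eta> \<in> C" using inv_C[OF eta] .
  have aie: "a (I \<eta>) = I \<eta>"
  proof -
    have "om a \<eta> [I \<eta>] 1 \<in> D \<and> P (om a \<eta> [I \<eta>] 1) = P (\<eta> # [I \<eta>])"
      using om[of "[I \<eta>]" 1] single_D[OF ieta] a_def by simp
    hence "[a (I \<eta>), \<eta>] \<in> D" "P [a (I \<eta>), \<eta>] = e" using inv_r[OF eta] unfolding om_def by auto
    from conjunct2[OF inv_unique[OF this]] show ?thesis .
  qed
  have conj: "\<forall>x\<in>C. [\<eta>, x, I \<eta>] \<in> D \<and> pg_conj M \<eta> x = a x"
  proof
    fix x assume x: "x \<in> C"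
    have ax: "a x \<in> C" using sa_C[OF f x] a_def by simp
    have "om a \<eta> [x, I x] 1 \<in> D" using om[of "[x, I x]" 1] inv_r[OF x] a_def by simp
    hence "[a x, \<eta>, I x] \<in> D" unfolding om_def by simp
    hence "iw [a x, \<eta>, I x] @ [a x, \<eta>, I x] \<in> D" by (rule invw_D)
    hence "[x, I \<eta>] @ [I (a x), a x, \<eta>, I x] \<in> D" using x by simp
    hence xi: "[x, I \<eta>] \<in> D" by (rule appD1)
    have o0: "om a \<eta> [x, I \<eta>] 0 \<in> D" using om[of "[x, I \<eta>]" 0] xi by simp
    hence d: "[\<eta>, x, I \<eta>] \<in> D" by simp
    have o2: "om a \<eta> [x, I \<eta>] 2 \<in> D \<and> P (om a \<eta> [x, I \<eta>] 2) = P [\<eta>, x, I \<eta>]"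
      using om[of "[x, I \<eta>]" 2] xi a_def by simp
    hence o2': "[a x, I \<eta>, \<eta>] \<in> D" "P [a x, I \<eta>, \<eta>] = P [\<eta>, x, I \<eta>]"
      unfolding om_def using aie by auto
    have "P [a x, I \<eta>, \<eta>] = P [a x, P [I \<eta>, \<eta>]]" using pair_assoc[OF o2'(1)] by simp
    also have "\<dots> = P [a x, e]" using inv_l[OF eta] by simp
    also have "\<dots> = a x" using e_right[OF ax] by simp
    finally have "pg_conj M \<eta> x = a x" using o2'(2) unfolding pg_conj_def by simp
    with d show "[\<eta>, x, I \<eta>] \<in> D \<and> pg_conj M \<eta> x = a x" by simp
  qed
  have mapeq: "\<And>u. set u \<subseteq> C \<Longrightarrow> map (pg_conj M \<eta>) u = map a u"
  proof -
    fix u assume u: "set u \<subseteq> C"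
    show "map (pg_conj M \<eta>) u = map a u"
    proof (rule map_cong[OF refl])
      fix x assume "x \<in> set u"
      hence "x \<in> C" using u by blast
      thus "pg_conj M \<eta> x = a x" using conj by blast
    qed
  qed
  have "\<eta> \<in> pg_N M"
    unfolding N_unfold
  proof (intro conjI)
    show "\<eta> \<in> C" using eta .
    show "\<forall>x\<in>C. [\<eta>, x, I \<eta>] \<in> D" using conj by simp
    show "\<exists>f. simplicial_aut M f \<and> (\<forall>x\<in>C. f (Suc 0) [x] = [pg_conj M \<eta> x])"
    proof (rule exI[of _ \<alpha>], intro conjI ballI)
      show "simplicial_aut M \<alpha>" using al .
      fix x assume x: "x \<in> C"
      have "\<alpha> (Suc 0) [x] = [sa \<alpha> x]" using sa_single[OF f x] by (rule conjunct1)
      also have "sa \<alpha> x = pg_conj M \<eta> x" using conj x a_def by simp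
      finally show "\<alpha> (Suc 0) [x] = [pg_conj M \<eta> x]" .
    qed
    show "\<forall>w\<in>D. \<forall>i\<le>length w. om (pg_conj M \<eta>) \<eta> w i \<in> D \<and> P (om (pg_conj M \<eta>) \<eta> w i) = P (\<eta> # w)"
    proof (intro ballI allI impI)
      fix w i assume w: "w \<in> D" and i: "i \<le> length w"
      have "set (take i w) \<subseteq> C" using D_lists[OF w] set_take_subset by (rule order_trans[rotated])
      hence "map (pg_conj M \<eta>) (take i w) = map a (take i w)" by (rule mapeq)
      hence eq: "om (pg_conj M \<eta>) \<eta> w i = om (sa \<alpha>) \<eta> w i" unfolding om_def a_def by (rule arg_cong)
      show "om (pg_conj M \<eta>) \<eta> w i \<in> D \<and> P (om (pg_conj M \<eta>) \<eta> w i) = P (\<eta> # w)"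
        unfolding eq by (rule om[OF w i])
    qed
  qed
  moreover have "\<forall>x\<in>C. pg_conj M \<eta> x = sa \<alpha> x" using conj a_def by simp
  ultimately show ?thesis by (rule conjI)
qed


lemma N_C: "\<eta> \<in> pg_N M \<Longrightarrow> \<eta> \<in> C"
  unfolding N_unfold by (elim conjE)

lemma N_om: "\<eta> \<in> pg_N M \<Longrightarrow> w \<in> D \<Longrightarrow> i \<le> length w \<Longrightarrow>
   om (pg_conj M \<eta>) \<eta> w i \<in> D \<and> P (om (pg_conj M \<eta>) \<eta> w i) = P (\<eta> # w)"
proof -
  assume h: "\<eta> \<in> pg_N M" "w \<in> D" "i \<le> length w"
  have "\<forall>w\<in>D. \<forall>i\<le>length w. om (pg_conj M \<eta>) \<eta> w i \<in> D \<and> P (om (pg_conj M \<eta>) \<eta> w i) = P (\<eta> # w)"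
    using h(1) unfolding N_unfold by (elim conjE)
  thus ?thesis using h(2,3) by blast
qed

lemma N_aut: "\<eta> \<in> pg_N M \<Longrightarrow> \<exists>f. simplicial_aut M f \<and> (\<forall>x\<in>C. f (Suc 0) [x] = [pg_conj M \<eta> x])"
  unfolding N_unfold by (elim conjE)

lemma N_cons: "\<eta> \<in> pg_N M \<Longrightarrow> w \<in> D \<Longrightarrow> \<eta> # w \<in> D"
  using N_om[of \<eta> w 0] by simp

lemma N_sa: "simplicial_map M f \<Longrightarrow> \<forall>x\<in>C. f (Suc 0) [x] = [pg_conj M \<eta> x] \<Longrightarrow> x \<in> C \<Longrightarrow> sa f x = pg_conj M \<eta> x"
  unfolding sa_def by simp

lemma N_conj_C: "\<eta> \<in> pg_N M \<Longrightarrow> x \<in> C \<Longrightarrow> pg_conj M \<eta> x \<in> C"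
proof -
  assume h: "\<eta> \<in> pg_N M" "x \<in> C"
  obtain f where f: "simplicial_aut M f" "\<forall>x\<in>C. f (Suc 0) [x] = [pg_conj M \<eta> x]" using N_aut[OF h(1)] by blast
  show ?thesis using sa_C[OF saut_map[OF f(1)] h(2)] N_sa[OF saut_map[OF f(1)] f(2) h(2)] by simp
qed

lemma N_lists: "set w \<subseteq> pg_N M \<Longrightarrow> w \<in> D"
  by (induction w) (auto intro: N_cons)

lemma saut_id: "simplicial_aut M (\<lambda>n w. w)"
  unfolding simplicial_aut_def simplicial_map_def by auto

lemma sa_id: "x \<in> C \<Longrightarrow> sa (\<lambda>n w. w) x = x"
  unfolding sa_def by simp

lemma one_N: "e \<in> pg_N M \<and> (\<forall>x\<in>C. pg_conj M e x = x)"
proof -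
  have r: "e \<in> pg_N M \<and> (\<forall>x\<in>C. pg_conj M e x = sa (\<lambda>n w. w) x)"
  proof (rule recog[OF saut_id e_C])
    fix w i assume w: "w \<in> D" and i: "i \<le> length w"
    have "take i w @ drop i w \<in> D" using w by simp
    hence 1: "take i w @ [e] @ drop i w \<in> D" "P (take i w @ [e] @ drop i w) = P w"
      using ins_e[of "take i w" "drop i w"] by (simp_all only: append_take_drop_id)
    have 2: "P (e # w) = P w" using ins_e[of "[]" w] w by simp
    have "map (sa (\<lambda>n w. w)) (take i w) = take i w"
    proof (rule map_idI)
      fix x assume "x \<in> set (take i w)"
      hence "x \<in> C" using D_lists[OF w] set_take_subset[of i w] by (meson subsetD)
      thus "sa (\<lambda>n w. w) x = x" by (rule sa_id)
    qed
    thus "om (sa (\<lambda>n w. w)) e w i \<in> D \<and> P (om (sa (\<lambda>n w. w)) e w i) = P (e # w)"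
      unfolding om_def using 1 2 by simp
  qed
  thus ?thesis using sa_id by simp
qed

lemma smap_comp: "simplicial_map M f \<Longrightarrow> simplicial_map M g \<Longrightarrow> simplicial_map M (\<lambda>n w. f n (g n w))"
proof -
  assume f: "simplicial_map M f" and g: "simplicial_map M g"
  show ?thesis unfolding simplicial_map_def
  proof (intro conjI allI ballI impI)
    fix n w assume w: "w \<in> simp M n"
    show "f n (g n w) \<in> simp M n" using sm_simp[OF f sm_simp[OF g w]] .
    fix i assume i: "i \<le> n" "0 < n"
    show "f (n - 1) (g (n - 1) (face M n i w)) = face M n i (f n (g n w))"
      using sm_face[OF g w i] sm_face[OF f sm_simp[OF g w] i] by simp
  next
    fix n w i assume w: "w \<in> simp M n" and i: "i \<le> n"
    show "f (Suc n) (g (Suc n) (degen M n i w)) = degen M n i (f n (g n w))"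
      using sm_degen[OF g w i] sm_degen[OF f sm_simp[OF g w] i] by simp
  qed
qed

lemma saut_inv: "simplicial_aut M f \<Longrightarrow> \<exists>g. simplicial_map M g \<and>
        (\<forall>n. \<forall>w\<in>simp M n. g n (f n w) = w \<and> f n (g n w) = w)"
  unfolding simplicial_aut_def by (elim conjE)

lemma saut_comp: "simplicial_aut M f \<Longrightarrow> simplicial_aut M g \<Longrightarrow> simplicial_aut M (\<lambda>n w. f n (g n w))"
proof -
  assume f: "simplicial_aut M f" and g: "simplicial_aut M g"
  obtain f' where f': "simplicial_map M f'" "\<forall>n. \<forall>w\<in>simp M n. f' n (f n w) = w \<and> f n (f' n w) = w"
    using saut_inv[OF f] by blast
  obtain g' where g': "simplicial_map M g'" "\<forall>n. \<forall>w\<in>simp M n. g' n (g n w) = w \<and> g n (g' n w) = w"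
    using saut_inv[OF g] by blast
  show ?thesis unfolding simplicial_aut_def
  proof (intro conjI exI[of _ "\<lambda>n w. g' n (f' n w)"] allI ballI)
    show "simplicial_map M (\<lambda>n w. f n (g n w))" using smap_comp[OF saut_map[OF f] saut_map[OF g]] .
    show "simplicial_map M (\<lambda>n w. g' n (f' n w))" using smap_comp[OF g'(1) f'(1)] .
    fix n w assume w: "w \<in> simp M n"
    show "g' n (f' n (f n (g n w))) = w" using f'(2) g'(2) w sm_simp[OF saut_map[OF g] w] by simp
    show "f n (g n (g' n (f' n w))) = w" using f'(2) g'(2) w sm_simp[OF f'(1) w] by simp
  qed
qed

lemma mult_N:
  assumes eta: "\<eta> \<in> pg_N M" and th: "\<theta> \<in> pg_N M"
  shows "P [\<eta>, \<theta>] \<in> pg_N M \<and> (\<forall>x\<in>C. pg_conj M (P [\<eta>, \<theta>]) x = pg_conj M \<eta> (pg_conj M \<theta> x))"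
proof -
  obtain f where f: "simplicial_aut M f" "\<forall>x\<in>C. f (Suc 0) [x] = [pg_conj M \<eta> x]" using N_aut[OF eta] by blast
  obtain g where g: "simplicial_aut M g" "\<forall>x\<in>C. g (Suc 0) [x] = [pg_conj M \<theta> x]" using N_aut[OF th] by blast
  define \<alpha> where "\<alpha> = (\<lambda>n w. f n (g n w))"
  have al: "simplicial_aut M \<alpha>" unfolding \<alpha>_def using saut_comp[OF f(1) g(1)] .
  have saa: "\<And>x. x \<in> C \<Longrightarrow> sa \<alpha> x = pg_conj M \<eta> (pg_conj M \<theta> x)"
    unfolding sa_def \<alpha>_def using f(2) g(2) N_conj_C[OF th] by simp
  have etD: "[\<eta>, \<theta>] \<in> D" using N_lists[of "[\<eta>, \<theta>]"] eta th by simp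
  have zC: "P [\<eta>, \<theta>] \<in> C" using prod_C[OF etD] .
  have r: "P [\<eta>, \<theta>] \<in> pg_N M \<and> (\<forall>x\<in>C. pg_conj M (P [\<eta>, \<theta>]) x = sa \<alpha> x)"
  proof (rule recog[OF al zC])
    fix w i assume w: "w \<in> D" and i: "i \<le> length w"
    define u where "u = om (pg_conj M \<theta>) \<theta> w i"
    have u: "u \<in> D" "P u = P (\<theta> # w)" using N_om[OF th w i] u_def by simp_all
    have lu: "i \<le> length u" using i unfolding u_def om_def by simp
    have tk: "take i u = map (pg_conj M \<theta>) (take i w)" using i unfolding u_def om_def by simp
    have dr: "drop i u = \<theta> # drop i w" using i unfolding u_def om_def by simp
    have v: "om (pg_conj M \<eta>) \<eta> u i \<in> D" "P (om (pg_conj M \<eta>) \<eta> u i) = P (\<eta> # u)"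
      using N_om[OF eta u(1) lu] by simp_all
    define L where "L = map (pg_conj M \<eta>) (map (pg_conj M \<theta>) (take i w))"
    have veq: "om (pg_conj M \<eta>) \<eta> u i = L @ [\<eta>, \<theta>] @ drop i w"
      unfolding om_def tk dr L_def by simp
    have c: "L @ [P [\<eta>, \<theta>]] @ drop i w \<in> D" "P (L @ [\<eta>, \<theta>] @ drop i w) = P (L @ [P [\<eta>, \<theta>]] @ drop i w)"
      using coll_D[of L "[\<eta>, \<theta>]" "drop i w"] coll_P[of L "[\<eta>, \<theta>]" "drop i w"] v(1) veq by simp_all
    have Lm: "L = map (sa \<alpha>) (take i w)"
    proof -
      have "set (take i w) \<subseteq> C" using D_lists[OF w] set_take_subset by (rule order_trans[rotated])
      thus ?thesis unfolding L_def using saa by (induction "take i w" arbitrary: w) auto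
    qed
    have omeq: "om (sa \<alpha>) (P [\<eta>, \<theta>]) w i = L @ [P [\<eta>, \<theta>]] @ drop i w"
      unfolding om_def Lm by simp
    have twD: "\<theta> # w \<in> D" using N_cons[OF th w] .
    have pw: "P w \<in> C" using prod_C[OF w] .
    have 3: "[\<eta>, \<theta>, P w] \<in> D" using N_lists[of "[\<eta>, \<theta>]"] eta th N_cons[OF eta N_cons[OF th single_D[OF pw]]] by simp
    have e1: "P (\<eta> # u) = P [\<eta>, P u]" using cons_P[OF N_cons[OF eta u(1)]] by (rule conjunct2)
    have e2: "P (\<theta> # w) = P [\<theta>, P w]" using cons_P[OF twD] by (rule conjunct2)
    have e3: "P [\<eta>, P [\<theta>, P w]] = P [P [\<eta>, \<theta>], P w]"
      using pair_assoc[OF 3] by (elim conjE) (rule trans, assumption, rule sym, assumption)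
    have zwD: "P [\<eta>, \<theta>] # w \<in> D"
    proof -
      have "[] @ [\<eta>, \<theta>] @ w \<in> D" using N_cons[OF eta twD] by simp
      from coll_D[OF this] show ?thesis by simp
    qed
    have e4: "P (P [\<eta>, \<theta>] # w) = P [P [\<eta>, \<theta>], P w]" using cons_P[OF zwD] by (rule conjunct2)
    have "P (om (sa \<alpha>) (P [\<eta>, \<theta>]) w i) = P (L @ [\<eta>, \<theta>] @ drop i w)" unfolding omeq using c(2) by (rule sym)
    also have "\<dots> = P (\<eta> # u)" using v(2) veq by simp
    also have "\<dots> = P [\<eta>, P u]" by (rule e1)
    also have "\<dots> = P [\<eta>, P [\<theta>, P w]]" using u(2) e2 by simp
    also have "\<dots> = P [P [\<eta>, \<theta>], P w]" by (rule e3)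
    also have "\<dots> = P (P [\<eta>, \<theta>] # w)" by (rule e4[symmetric])
    finally show "om (sa \<alpha>) (P [\<eta>, \<theta>]) w i \<in> D \<and> P (om (sa \<alpha>) (P [\<eta>, \<theta>]) w i) = P (P [\<eta>, \<theta>] # w)"
      using c(1) omeq by simp
  qed
  thus ?thesis using saa by simp
qed


lemma map_iw: "set u \<subseteq> C \<Longrightarrow> (\<And>x. x \<in> C \<Longrightarrow> a (I x) = I (a x)) \<Longrightarrow> map a (iw u) = iw (map a u)"
proof (induction u)
  case Nil thus ?case by simp
next
  case (Cons x u)
  have x: "x \<in> C" using Cons.prems(1) by simp
  have "map a (iw (x # u)) = map a (iw u) @ [a (I x)]" by simp
  also have "map a (iw u) = iw (map a u)" using Cons.IH Cons.prems by simp
  also have "a (I x) = I (a x)" using Cons.prems(2)[OF x] .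
  finally show ?case by simp
qed

lemma map_cancel: "set u \<subseteq> C \<Longrightarrow> (\<And>x. x \<in> C \<Longrightarrow> c (a x) = x) \<Longrightarrow> map c (map a u) = u"
  by (induction u) auto

lemma iw_om:
  assumes w: "set w \<subseteq> C" and i: "i \<le> length w" and eta: "\<eta> \<in> C"
    and ca: "\<And>x. x \<in> C \<Longrightarrow> c (a x) = x" and ai: "\<And>x. x \<in> C \<Longrightarrow> a (I x) = I (a x)"
  shows "iw (om a (I \<eta>) w i) = om c \<eta> (map a (iw w)) (length w - i)"
proof -
  define u where "u = take i w"
  define v where "v = drop i w"
  have wuv: "w = u @ v" unfolding u_def v_def by simp
  have uC: "set u \<subseteq> C" using w wuv by simp
  have vC: "set v \<subseteq> C" using w wuv by simp
  have lv: "length v = length w - i" unfolding v_def by simp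
  have "iw (om a (I \<eta>) w i) = iw (map a u @ [I \<eta>] @ v)" unfolding om_def u_def v_def by simp
  also have "\<dots> = iw v @ [\<eta>] @ iw (map a u)" using eta by simp
  finally have L: "iw (om a (I \<eta>) w i) = iw v @ [\<eta>] @ iw (map a u)" .
  have ww: "map a (iw w) = map a (iw v) @ map a (iw u)" unfolding wuv by simp
  have lv2: "length (map a (iw v)) = length w - i" using lv unfolding iw_def by simp
  have t: "take (length w - i) (map a (iw w)) = map a (iw v)" unfolding ww using lv2
    by (metis append_eq_conv_conj)
  have d: "drop (length w - i) (map a (iw w)) = map a (iw u)" unfolding ww using lv2
    by (metis append_eq_conv_conj)
  have "om c \<eta> (map a (iw w)) (length w - i) = map c (map a (iw v)) @ [\<eta>] @ map a (iw u)"
    unfolding om_def t d by simp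
  also have "map c (map a (iw v)) = iw v" using map_cancel[of "iw v" c a, OF iw_lists[OF vC] ca] .
  also have "map a (iw u) = iw (map a u)" using map_iw[of u a, OF uC ai] .
  finally show ?thesis using L by simp
qed

lemma inv_N:
  assumes eta: "\<eta> \<in> pg_N M"
  shows "I \<eta> \<in> pg_N M \<and> (\<forall>x\<in>C. pg_conj M \<eta> (pg_conj M (I \<eta>) x) = x)"
proof -
  obtain f where f: "simplicial_aut M f" "\<forall>x\<in>C. f (Suc 0) [x] = [pg_conj M \<eta> x]" using N_aut[OF eta] by blast
  have fm: "simplicial_map M f" using saut_map[OF f(1)] .
  obtain g where g: "simplicial_map M g" "\<forall>n. \<forall>w\<in>simp M n. g n (f n w) = w \<and> f n (g n w) = w"
    using saut_inv[OF f(1)] by blast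
  have ga: "simplicial_aut M g" unfolding simplicial_aut_def
  proof (intro conjI exI[of _ f])
    show "simplicial_map M g" using g(1) .
    show "simplicial_map M f" using fm .
    show "\<forall>n. \<forall>w\<in>simp M n. f n (g n w) = w \<and> g n (f n w) = w" using g(2) by simp
  qed
  define a where "a = sa g"
  have eC: "\<eta> \<in> C" using N_C[OF eta] .
  have ieC: "I \<eta> \<in> C" using inv_C[OF eC] .
  have aC: "\<And>x. x \<in> C \<Longrightarrow> a x \<in> C" unfolding a_def using sa_C[OF g(1)] .
  have ca: "\<And>x. x \<in> C \<Longrightarrow> pg_conj M \<eta> (a x) = x"
  proof -
    fix x assume x: "x \<in> C"
    have "f (Suc 0) (g (Suc 0) [x]) = [x]" using g(2) single_simp[OF x] by simp
    moreover have "g (Suc 0) [x] = [a x]" using sa_single[OF g(1) x] a_def by simp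
    moreover have "f (Suc 0) [a x] = [pg_conj M \<eta> (a x)]" using f(2) aC[OF x] by simp
    ultimately show "pg_conj M \<eta> (a x) = x" by simp
  qed
  have ai: "\<And>x. x \<in> C \<Longrightarrow> a (I x) = I (a x)" unfolding a_def using sa_inv[OF g(1)] .
  have key: "\<And>w i. w \<in> D \<Longrightarrow> i \<le> length w \<Longrightarrow>
     om a (I \<eta>) w i \<in> D \<and> P (om a (I \<eta>) w i) = I (P (\<eta> # map a (iw w)))"
  proof -
    fix w i assume w: "w \<in> D" and i: "i \<le> length w"
    have wC: "set w \<subseteq> C" using D_lists[OF w] .
    define t where "t = om a (I \<eta>) w i"
    have w2: "map a (iw w) \<in> D" unfolding a_def using map_sa_D[OF g(1) iw_D[OF w]] .
    have l2: "length w - i \<le> length (map a (iw w))" unfolding iw_def by simp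
    have it: "iw t = om (pg_conj M \<eta>) \<eta> (map a (iw w)) (length w - i)"
      unfolding t_def using iw_om[OF wC i eC ca ai] .
    have o: "iw t \<in> D" "P (iw t) = P (\<eta> # map a (iw w))"
      unfolding it using N_om[OF eta w2 l2] by simp_all
    have tC: "set t \<subseteq> C" unfolding t_def om_def using wC aC ieC set_take_subset[of i w] set_drop_subset[of i w]
      by auto
    have tt: "iw (iw t) = t" using iw_iw[OF tC] .
    have "t \<in> D" using iw_D[OF o(1)] tt by simp
    moreover have "P t = I (P (\<eta> # map a (iw w)))" using iw_P[OF o(1)] tt o(2) by simp
    ultimately show "om a (I \<eta>) w i \<in> D \<and> P (om a (I \<eta>) w i) = I (P (\<eta> # map a (iw w)))"
      unfolding t_def by simp
  qed
  have r: "I \<eta> \<in> pg_N M \<and> (\<forall>x\<in>C. pg_conj M (I \<eta>) x = sa g x)"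
  proof (rule recog[OF ga ieC])
    fix w i assume w: "w \<in> D" and i: "i \<le> length w"
    have k1: "om a (I \<eta>) w i \<in> D \<and> P (om a (I \<eta>) w i) = I (P (\<eta> # map a (iw w)))" using key[OF w i] .
    have k0: "P (om a (I \<eta>) w 0) = I (P (\<eta> # map a (iw w)))" using key[OF w, of 0] by simp
    show "om (sa g) (I \<eta>) w i \<in> D \<and> P (om (sa g) (I \<eta>) w i) = P (I \<eta> # w)"
      using k1 k0 unfolding a_def by simp
  qed
  thus ?thesis using ca a_def by simp
qed


lemma prod_cons: "x # w \<in> D \<Longrightarrow> P (x # w) = P [x, P w]"
  using cons_P by blast

lemma N_prod: "set w \<subseteq> pg_N M \<Longrightarrow> P w \<in> pg_N M"
proof (induction w)
  case Nil thus ?case using one_N by (simp add: pg_one_def)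
next
  case (Cons x w)
  have x: "x \<in> pg_N M" and w: "set w \<subseteq> pg_N M" using Cons.prems by auto
  have "P (x # w) = P [x, P w]" using prod_cons[OF N_lists[OF Cons.prems]] .
  moreover have "P [x, P w] \<in> pg_N M" using mult_N[OF x Cons.IH[OF w]] by (rule conjunct1)
  ultimately show ?case by simp
qed

lemma part1: "pg_subgroup M (pg_N M)"
  unfolding pg_subgroup_def
proof (intro conjI ballI subsetI)
  show "\<And>x. x \<in> pg_N M \<Longrightarrow> x \<in> C" using N_C .
  show "\<And>w. w \<in> lists (pg_N M) \<Longrightarrow> w \<in> D" using N_lists by (simp add: lists_eq_set)
  show "\<And>w. w \<in> lists (pg_N M) \<Longrightarrow> P w \<in> pg_N M" using N_prod by (simp add: lists_eq_set)
  show "\<And>x. x \<in> pg_N M \<Longrightarrow> I x \<in> pg_N M" using inv_N by simp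
qed

lemma Z_unfold: "z \<in> pg_Z M \<longleftrightarrow> z \<in> pg_N M \<and> (\<forall>x\<in>C. pg_conj M z x = x)"
  unfolding pg_Z_def by simp

lemma Z_prod: "set w \<subseteq> pg_Z M \<Longrightarrow> P w \<in> pg_Z M"
proof (induction w)
  case Nil thus ?case using one_N unfolding Z_unfold by (simp add: pg_one_def)
next
  case (Cons x w)
  have x: "x \<in> pg_Z M" and w: "set w \<subseteq> pg_Z M" using Cons.prems by auto
  have xN: "x \<in> pg_N M" and xc: "\<forall>y\<in>C. pg_conj M x y = y" using x unfolding Z_unfold by auto
  have pw: "P w \<in> pg_N M" "\<forall>y\<in>C. pg_conj M (P w) y = y" using Cons.IH[OF w] unfolding Z_unfold by auto
  have wN: "set (x # w) \<subseteq> pg_N M" using Cons.prems unfolding pg_Z_def by auto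
  have "P (x # w) = P [x, P w]" using prod_cons[OF N_lists[OF wN]] .
  moreover have "P [x, P w] \<in> pg_Z M"
    unfolding Z_unfold using mult_N[OF xN pw(1)] pw(2) xc by simp
  ultimately show ?case by simp
qed

lemma Z_inv: "z \<in> pg_Z M \<Longrightarrow> I z \<in> pg_Z M"
proof -
  assume z: "z \<in> pg_Z M"
  have zN: "z \<in> pg_N M" and zc: "\<forall>y\<in>C. pg_conj M z y = y" using z unfolding Z_unfold by auto
  have i: "I z \<in> pg_N M" "\<forall>x\<in>C. pg_conj M z (pg_conj M (I z) x) = x" using inv_N[OF zN] by auto
  have "\<forall>x\<in>C. pg_conj M (I z) x = x"
  proof
    fix x assume x: "x \<in> C"
    have "pg_conj M (I z) x \<in> C" using N_conj_C[OF i(1) x] .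
    hence "pg_conj M z (pg_conj M (I z) x) = pg_conj M (I z) x" using zc by simp
    thus "pg_conj M (I z) x = x" using i(2) x by simp
  qed
  thus ?thesis unfolding Z_unfold using i(1) by simp
qed

lemma Z_central: "z \<in> pg_Z M \<Longrightarrow> x \<in> C \<Longrightarrow> [x, z] \<in> D \<and> P [x, z] = P [z, x]"
proof -
  assume z: "z \<in> pg_Z M" and x: "x \<in> C"
  have zN: "z \<in> pg_N M" and zc: "\<forall>y\<in>C. pg_conj M z y = y" using z unfolding Z_unfold by auto
  have "om (pg_conj M z) z [x] 1 \<in> D \<and> P (om (pg_conj M z) z [x] 1) = P (z # [x])"
    using N_om[OF zN single_D[OF x], of 1] by simp
  thus ?thesis unfolding om_def using zc x by simp
qed

lemma part2: "pg_subgroup M (pg_Z M) \<and> (\<forall>x\<in>pg_Z M. \<forall>y\<in>pg_Z M. P [x, y] = P [y, x])"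
proof (intro conjI ballI)
  have ZN: "pg_Z M \<subseteq> pg_N M" unfolding pg_Z_def by auto
  show "pg_subgroup M (pg_Z M)"
    unfolding pg_subgroup_def
  proof (intro conjI ballI subsetI)
    show "\<And>x. x \<in> pg_Z M \<Longrightarrow> x \<in> C" using N_C ZN by auto
    show "\<And>w. w \<in> lists (pg_Z M) \<Longrightarrow> w \<in> D" using N_lists ZN by (auto simp add: lists_eq_set)
    show "\<And>w. w \<in> lists (pg_Z M) \<Longrightarrow> P w \<in> pg_Z M" using Z_prod by (simp add: lists_eq_set)
    show "\<And>x. x \<in> pg_Z M \<Longrightarrow> I x \<in> pg_Z M" using Z_inv .
  qed
  fix x y assume x: "x \<in> pg_Z M" and y: "y \<in> pg_Z M"
  have "x \<in> C" using x N_C ZN by auto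
  thus "P [x, y] = P [y, x]" using Z_central[OF y] by simp
qed


subsection \<open>The homotopy attached to an element of N\<close>

definition hL :: "'a \<Rightarrow> nat \<Rightarrow> nat \<Rightarrow> 'a \<Rightarrow> 'a" where
  "hL \<eta> k j x = (if Suc j < k then pg_conj M \<eta> x else if Suc j = k then P [\<eta>, x] else x)"

definition FF :: "'a \<Rightarrow> nat \<Rightarrow> 'a list \<Rightarrow> nat \<Rightarrow> 'a list" where
  "FF \<eta> n w k = map (\<lambda>j. hL \<eta> k j (w ! j)) [0..<length w]"

lemma FF_length[simp]: "length (FF \<eta> n w k) = length w"
  unfolding FF_def by simp

lemma FF_nth: "j < length w \<Longrightarrow> FF \<eta> n w k ! j = hL \<eta> k j (w ! j)"
  unfolding FF_def by simp

lemma E1: "\<eta> \<in> pg_N M \<Longrightarrow> [a, b] \<in> D \<Longrightarrow> pg_conj M \<eta> (P [a, b]) = P [pg_conj M \<eta> a, pg_conj M \<eta> b]"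
proof -
  assume eta: "\<eta> \<in> pg_N M" and ab: "[a, b] \<in> D"
  obtain f where f: "simplicial_aut M f" "\<forall>x\<in>C. f (Suc 0) [x] = [pg_conj M \<eta> x]" using N_aut[OF eta] by blast
  have fm: "simplicial_map M f" using saut_map[OF f(1)] .
  have abC: "a \<in> C" "b \<in> C" "P [a, b] \<in> C" using pair_C[OF ab] prod_C[OF ab] by auto
  have "sa f (P [a, b]) = P [sa f a, sa f b]" using sa_mult[OF fm ab] by (rule conjunct2)
  thus ?thesis using N_sa[OF fm f(2)] abC by simp
qed

lemma E4: "\<eta> \<in> pg_N M \<Longrightarrow> pg_conj M \<eta> e = e"
proof -
  assume eta: "\<eta> \<in> pg_N M"
  obtain f where f: "simplicial_aut M f" "\<forall>x\<in>C. f (Suc 0) [x] = [pg_conj M \<eta> x]" using N_aut[OF eta] by blast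
  have fm: "simplicial_map M f" using saut_map[OF f(1)] .
  show ?thesis using sa_e[OF fm] N_sa[OF fm f(2) e_C] by simp
qed

lemma E3: "\<eta> \<in> pg_N M \<Longrightarrow> [a, b] \<in> D \<Longrightarrow> [\<eta>, a, b] \<in> D \<and> P [P [\<eta>, a], b] = P [\<eta>, P [a, b]]"
proof -
  assume eta: "\<eta> \<in> pg_N M" and ab: "[a, b] \<in> D"
  have 3: "[\<eta>, a, b] \<in> D" using N_cons[OF eta ab] .
  have "P [P [\<eta>, a], b] = P [\<eta>, a, b]" using pair_assoc[OF 3] by (elim conjE)
  moreover have "P [\<eta>, P [a, b]] = P [\<eta>, a, b]" using pair_assoc[OF 3] by (elim conjE)
  ultimately show ?thesis using 3 by simp
qed

lemma E2: "\<eta> \<in> pg_N M \<Longrightarrow> [a, b] \<in> D \<Longrightarrow> P [pg_conj M \<eta> a, P [\<eta>, b]] = P [\<eta>, P [a, b]]"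
proof -
  assume eta: "\<eta> \<in> pg_N M" and ab: "[a, b] \<in> D"
  have o: "om (pg_conj M \<eta>) \<eta> [a, b] 1 \<in> D \<and> P (om (pg_conj M \<eta>) \<eta> [a, b] 1) = P (\<eta> # [a, b])"
    using N_om[OF eta ab, of 1] by simp
  have o1: "[pg_conj M \<eta> a, \<eta>, b] \<in> D" using o unfolding om_def by simp
  have o2: "P [pg_conj M \<eta> a, \<eta>, b] = P [\<eta>, a, b]" using o unfolding om_def by simp
  have "P [pg_conj M \<eta> a, P [\<eta>, b]] = P [pg_conj M \<eta> a, \<eta>, b]" using pair_assoc[OF o1] by (elim conjE)
  moreover have "P [\<eta>, P [a, b]] = P [\<eta>, a, b]" using pair_assoc[OF N_cons[OF eta ab]] by (elim conjE)
  ultimately show ?thesis using o2 by simp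
qed

lemma FF_0: "FF \<eta> n w 0 = w"
  by (rule nth_equalityI) (auto simp: FF_nth hL_def)

lemma FF_top: "length w = n \<Longrightarrow> FF \<eta> n w (Suc n) = map (pg_conj M \<eta>) w"
  by (rule nth_equalityI) (auto simp: FF_nth hL_def)

lemma FF_mid: "length w = n \<Longrightarrow> 0 < k \<Longrightarrow> k \<le> n \<Longrightarrow>
  FF \<eta> n w k = map (pg_conj M \<eta>) (take (k - 1) w) @ [P [\<eta>, w ! (k - 1)]] @ drop k w"
  by (rule nth_equalityI) (auto simp: FF_nth hL_def nth_append min_def)

lemma N_map_simp: "\<eta> \<in> pg_N M \<Longrightarrow> w \<in> simp M n \<Longrightarrow> map (pg_conj M \<eta>) w \<in> simp M n"
proof -
  assume eta: "\<eta> \<in> pg_N M" and w: "w \<in> simp M n"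
  obtain f where f: "simplicial_aut M f" "\<forall>x\<in>C. f (Suc 0) [x] = [pg_conj M \<eta> x]" using N_aut[OF eta] by blast
  have fm: "simplicial_map M f" using saut_map[OF f(1)] .
  have "f n w = map (sa f) w" using spine[OF fm w] .
  also have "map (sa f) w = map (pg_conj M \<eta>) w"
  proof (rule map_cong[OF refl])
    fix x assume "x \<in> set w"
    hence "x \<in> C" using D_lists simpD[OF w] by (meson subsetD)
    thus "sa f x = pg_conj M \<eta> x" using N_sa[OF fm f(2)] by simp
  qed
  finally show ?thesis using sm_simp[OF fm w] by simp
qed

lemma FF_simp: "\<eta> \<in> pg_N M \<Longrightarrow> w \<in> simp M n \<Longrightarrow> k \<le> Suc n \<Longrightarrow> FF \<eta> n w k \<in> simp M n"
proof -
  assume eta: "\<eta> \<in> pg_N M" and w: "w \<in> simp M n" and k: "k \<le> Suc n"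
  have wD: "w \<in> D" and lw: "length w = n" using simpD[OF w] by auto
  consider "k = 0" | "k = Suc n" | "0 < k" "k \<le> n" using k by linarith
  then show ?thesis
  proof cases
    case 1 thus ?thesis using FF_0 w by simp
  next
    case 2 thus ?thesis using FF_top[OF lw] N_map_simp[OF eta w] by simp
  next
    case 3
    have o: "om (pg_conj M \<eta>) \<eta> w (k - 1) \<in> D" using N_om[OF eta wD, of "k - 1"] 3 lw by simp
    have "drop (k - 1) w = w ! (k - 1) # drop k w" using 3 lw
      by (metis Cons_nth_drop_Suc Suc_diff_1 diff_less less_le_trans zero_less_one)
    hence "map (pg_conj M \<eta>) (take (k - 1) w) @ [\<eta>, w ! (k - 1)] @ drop k w \<in> D"
      using o unfolding om_def by simp
    hence "map (pg_conj M \<eta>) (take (k - 1) w) @ [P [\<eta>, w ! (k - 1)]] @ drop k w \<in> D"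
      by (rule coll_D)
    thus ?thesis using FF_mid[OF lw 3] lw 3 by (auto intro: simpI)
  qed
qed


lemma pair_in_simp: "w \<in> simp M n \<Longrightarrow> 0 < i \<Longrightarrow> i < n \<Longrightarrow> [w ! (i - 1), w ! i] \<in> D"
proof -
  assume w: "w \<in> simp M n" and i: "0 < i" "i < n"
  have wD: "w \<in> D" and lw: "length w = n" using simpD[OF w] by auto
  have "Suc (i - 1) < length w" using i lw by simp
  hence "take (i - 1) w @ [w!(i-1), w!(Suc (i-1))] @ drop (Suc (Suc (i - 1))) w \<in> D"
    using split2 wD by metis
  hence "[w!(i-1), w!(Suc (i-1))] \<in> D" by (rule mid_D)
  thus ?thesis using i by simp
qed

lemma FF_face:
  assumes eta: "\<eta> \<in> pg_N M" and w: "w \<in> simp M n" and k: "k \<le> Suc n" and i: "i \<le> n" and n: "0 < n"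
  shows "FF \<eta> (n - 1) (face M n i w) (d1_face i k) = face M n i (FF \<eta> n w k)"
proof (rule nth_equalityI)
  have lw: "length w = n" using simpD[OF w] by auto
  show "length (FF \<eta> (n - 1) (face M n i w) (d1_face i k)) = length (face M n i (FF \<eta> n w k))"
    using length_face[OF lw n i] length_face[of "FF \<eta> n w k" n i] lw n i by simp
  fix j assume "j < length (FF \<eta> (n - 1) (face M n i w) (d1_face i k))"
  hence j: "j < n - 1" using length_face[OF lw n i] by simp
  have L: "FF \<eta> (n - 1) (face M n i w) (d1_face i k) ! j = hL \<eta> (d1_face i k) j (face M n i w ! j)"
    using FF_nth j length_face[OF lw n i] by simp
  have R: "face M n i (FF \<eta> n w k) ! j = (if i = 0 then FF \<eta> n w k ! (Suc j) else if i = n then FF \<eta> n w k ! j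
     else if j < i - 1 then FF \<eta> n w k ! j else if j = i - 1 then P [FF \<eta> n w k ! (i-1), FF \<eta> n w k ! i]
     else FF \<eta> n w k ! (Suc j))"
    using nth_face[of "FF \<eta> n w k" n i j] lw n i j by simp
  have Lw: "face M n i w ! j = (if i = 0 then w!(Suc j) else if i = n then w!j
     else if j < i - 1 then w!j else if j = i - 1 then P [w!(i-1), w!i] else w!(Suc j))"
    using nth_face[OF lw n i j] .
  have FFn: "\<And>m. m < n \<Longrightarrow> FF \<eta> n w k ! m = hL \<eta> k m (w ! m)" using FF_nth lw by simp
  show "FF \<eta> (n - 1) (face M n i w) (d1_face i k) ! j = face M n i (FF \<eta> n w k) ! j"
  proof -
    consider "i = 0" | "i = n" | "0 < i" "i < n" "j < i - 1" | "0 < i" "i < n" "j = i - 1" | "0 < i" "i < n" "i - 1 < j"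
      using i by linarith
    then show ?thesis
    proof cases
      case 1 thus ?thesis using L R Lw FFn j by (auto simp: hL_def d1_face_def)
    next
      case 2 thus ?thesis using L R Lw FFn j n by (auto simp: hL_def d1_face_def)
    next
      case 3 thus ?thesis using L R Lw FFn j n by (auto simp: hL_def d1_face_def)
    next
      case 5 thus ?thesis using L R Lw FFn j n by (auto simp: hL_def d1_face_def)
    next
      case 4
      have ab: "[w ! (i - 1), w ! i] \<in> D" using pair_in_simp[OF w 4(1,2)] .
      have Li: "FF \<eta> (n - 1) (face M n i w) (d1_face i k) ! j = hL \<eta> (d1_face i k) (i - 1) (P [w!(i-1), w!i])"
        using L Lw 4 by simp
      have Ri: "face M n i (FF \<eta> n w k) ! j = P [hL \<eta> k (i - 1) (w ! (i - 1)), hL \<eta> k i (w ! i)]"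
        using R FFn 4 by simp
      consider "Suc i < k" | "k = Suc i" | "k = i" | "k < i" by linarith
      then show ?thesis
      proof cases
        case 1 thus ?thesis using Li Ri 4 E1[OF eta ab] by (auto simp add: hL_def d1_face_def)
      next
        case 2 thus ?thesis using Li Ri 4 E2[OF eta ab] by (auto simp add: hL_def d1_face_def)
      next
        case 3 thus ?thesis using Li Ri 4 E3[OF eta ab] by (auto simp add: hL_def d1_face_def)
      next
        case 5: 4 thus ?thesis using Li Ri 4 by (auto simp add: hL_def d1_face_def)
      qed
    qed
  qed
qed

lemma FF_degen:
  assumes eta: "\<eta> \<in> pg_N M" and w: "w \<in> simp M n" and k: "k \<le> Suc n" and i: "i \<le> n"
  shows "FF \<eta> (Suc n) (degen M n i w) (d1_degen i k) = degen M n i (FF \<eta> n w k)"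
proof (rule nth_equalityI)
  have lw: "length w = n" using simpD[OF w] by auto
  show "length (FF \<eta> (Suc n) (degen M n i w) (d1_degen i k)) = length (degen M n i (FF \<eta> n w k))"
    using length_degen[OF lw i] length_degen[of "FF \<eta> n w k" n i] lw i by simp
  fix j assume "j < length (FF \<eta> (Suc n) (degen M n i w) (d1_degen i k))"
  hence j: "j < Suc n" using length_degen[OF lw i] by simp
  have L: "FF \<eta> (Suc n) (degen M n i w) (d1_degen i k) ! j = hL \<eta> (d1_degen i k) j (degen M n i w ! j)"
    using FF_nth j length_degen[OF lw i] by simp
  have R: "degen M n i (FF \<eta> n w k) ! j = (if j < i then FF \<eta> n w k ! j else if j = i then e else FF \<eta> n w k ! (j - 1))"
    using nth_degen[of "FF \<eta> n w k" n i j] lw i j by simp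
  have Lw: "degen M n i w ! j = (if j < i then w!j else if j = i then e else w!(j - 1))"
    using nth_degen[OF lw i j] .
  have FFn: "\<And>m. m < n \<Longrightarrow> FF \<eta> n w k ! m = hL \<eta> k m (w ! m)" using FF_nth lw by simp
  have e4: "pg_conj M \<eta> e = e" using E4[OF eta] .
  consider "j < i" | "j = i" | "i < j" by linarith
  then show "FF \<eta> (Suc n) (degen M n i w) (d1_degen i k) ! j = degen M n i (FF \<eta> n w k) ! j"
  proof cases
    case 1 thus ?thesis using L R Lw FFn j i by (auto simp: hL_def d1_degen_def)
  next
    case 2 thus ?thesis using L R Lw e4 by (auto simp: hL_def d1_degen_def)
  next
    case 3 thus ?thesis using L R Lw FFn j i by (auto simp: hL_def d1_degen_def)
  qed
qed


definition cn :: "'a \<Rightarrow> nat \<Rightarrow> 'a list \<Rightarrow> 'a list" where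
  "cn \<eta> = (\<lambda>n w. if w \<in> simp M n then map (pg_conj M \<eta>) w else undefined)"

lemma saut_agree:
  assumes f: "simplicial_aut M f" and agree: "\<And>n w. w \<in> simp M n \<Longrightarrow> h n w = f n w"
  shows "simplicial_aut M h"
proof -
  have fm: "simplicial_map M f" using saut_map[OF f] .
  obtain g where g: "simplicial_map M g" "\<forall>n. \<forall>w\<in>simp M n. g n (f n w) = w \<and> f n (g n w) = w"
    using saut_inv[OF f] by blast
  have hm: "simplicial_map M h" unfolding simplicial_map_def
  proof (intro conjI allI ballI impI)
    fix n w assume w: "w \<in> simp M n"
    show "h n w \<in> simp M n" using sm_simp[OF fm w] agree[OF w] by simp
    fix i assume i: "i \<le> n" "0 < n"
    show "h (n - 1) (face M n i w) = face M n i (h n w)"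
      using sm_face[OF fm w i] agree[OF w] agree[OF face_simp[OF w i(2,1)]] by simp
  next
    fix n w i assume w: "w \<in> simp M n" and i: "i \<le> n"
    show "h (Suc n) (degen M n i w) = degen M n i (h n w)"
      using sm_degen[OF fm w i] agree[OF w] agree[OF degen_simp[OF w i]] by simp
  qed
  show ?thesis unfolding simplicial_aut_def
  proof (intro conjI exI[of _ g] allI ballI)
    show "simplicial_map M h" using hm .
    show "simplicial_map M g" using g(1) .
    fix n w assume w: "w \<in> simp M n"
    show "g n (h n w) = w" using g(2) w agree[OF w] by simp
    have "g n w \<in> simp M n" using sm_simp[OF g(1) w] .
    thus "h n (g n w) = w" using g(2) w agree by simp
  qed
qed

lemma N_spine: "\<eta> \<in> pg_N M \<Longrightarrow> \<exists>f. simplicial_aut M f \<and> (\<forall>n. \<forall>w\<in>simp M n. f n w = map (pg_conj M \<eta>) w)"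
proof -
  assume eta: "\<eta> \<in> pg_N M"
  obtain f where f: "simplicial_aut M f" "\<forall>x\<in>C. f (Suc 0) [x] = [pg_conj M \<eta> x]" using N_aut[OF eta] by blast
  have fm: "simplicial_map M f" using saut_map[OF f(1)] .
  have "\<forall>n. \<forall>w\<in>simp M n. f n w = map (pg_conj M \<eta>) w"
  proof (intro allI ballI)
    fix n w assume w: "w \<in> simp M n"
    have "f n w = map (sa f) w" using spine[OF fm w] .
    also have "map (sa f) w = map (pg_conj M \<eta>) w"
    proof (rule map_cong[OF refl])
      fix x assume "x \<in> set w"
      hence "x \<in> C" using D_lists simpD[OF w] by (meson subsetD)
      thus "sa f x = pg_conj M \<eta> x" using N_sa[OF fm f(2)] by simp
    qed
    finally show "f n w = map (pg_conj M \<eta>) w" .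
  qed
  thus ?thesis using f(1) by blast
qed

lemma cn_Inn: "\<eta> \<in> pg_N M \<Longrightarrow> cn \<eta> \<in> carrier (Inn M) \<and> (\<forall>x\<in>C. cn \<eta> (Suc 0) [x] = [pg_conj M \<eta> x])"
proof -
  assume eta: "\<eta> \<in> pg_N M"
  obtain f where f: "simplicial_aut M f" "\<forall>n. \<forall>w\<in>simp M n. f n w = map (pg_conj M \<eta>) w"
    using N_spine[OF eta] by blast
  have sa: "simplicial_aut M (cn \<eta>)"
    by (rule saut_agree[OF f(1)]) (simp add: cn_def f(2))
  have hom: "simplicial_homotopy M (FF \<eta>) (cn \<eta>) (\<lambda>n w. w)"
    unfolding simplicial_homotopy_def
  proof (intro conjI allI ballI impI)
    fix n w k assume w: "w \<in> simp M n" and k: "k \<le> Suc n"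
    show "FF \<eta> n w k \<in> simp M n" using FF_simp[OF eta w k] .
    fix i assume i: "i \<le> n" "0 < n"
    show "FF \<eta> (n - 1) (face M n i w) (d1_face i k) = face M n i (FF \<eta> n w k)"
      using FF_face[OF eta w k i] .
  next
    fix n w k i assume w: "w \<in> simp M n" and k: "k \<le> Suc n" and i: "i \<le> n"
    show "FF \<eta> (Suc n) (degen M n i w) (d1_degen i k) = degen M n i (FF \<eta> n w k)"
      using FF_degen[OF eta w k i] .
  next
    fix n w assume w: "w \<in> simp M n"
    show "FF \<eta> n w (Suc n) = cn \<eta> n w" using FF_top simpD[OF w] w unfolding cn_def by simp
    show "FF \<eta> n w 0 = w" using FF_0 .
  qed
  have "cn \<eta> \<in> carrier (Inn M)"
    unfolding Inn_def inner_aut_def using sa hom by (auto simp: cn_def)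
  moreover have "\<forall>x\<in>C. cn \<eta> (Suc 0) [x] = [pg_conj M \<eta> x]"
    using single_simp unfolding cn_def by simp
  ultimately show ?thesis by simp
qed

lemma om_nth: "i \<le> length w \<Longrightarrow> j < Suc (length w) \<Longrightarrow>
  om a \<eta> w i ! j = (if j < i then a (w ! j) else if j = i then \<eta> else w ! (j - 1))"
  unfolding om_def by (auto simp: nth_append min_def)

lemma om_length[simp]: "i \<le> length w \<Longrightarrow> length (om a \<eta> w i) = Suc (length w)"
  unfolding om_def by simp

lemma face_degen:
  assumes w: "w \<in> simp M n" and i: "i \<le> n" and j: "j = i \<or> j = Suc i"
  shows "face M (Suc n) j (degen M n i w) = w"
proof (rule nth_equalityI)
  have lw: "length w = n" and wD: "w \<in> D" using simpD[OF w] by auto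
  have ld: "length (degen M n i w) = Suc n" using length_degen[OF lw i] .
  have jn: "j \<le> Suc n" using i j by auto
  show "length (face M (Suc n) j (degen M n i w)) = length w" using length_face[OF ld _ jn] lw by simp
  fix m assume "m < length (face M (Suc n) j (degen M n i w))"
  hence m: "m < n" using length_face[OF ld _ jn] by simp
  have wC: "\<And>q. q < n \<Longrightarrow> w ! q \<in> C" using D_lists[OF wD] lw by (meson nth_mem subsetD)
  have F: "face M (Suc n) j (degen M n i w) ! m = (if j = 0 then degen M n i w!(Suc m) else if j = Suc n then degen M n i w!m
     else if m < j - 1 then degen M n i w!m else if m = j - 1 then P [degen M n i w!(j-1), degen M n i w!j] else degen M n i w!(Suc m))"
    using nth_face[OF ld _ jn] m by simp
  have Dg: "\<And>q. q < Suc n \<Longrightarrow> degen M n i w ! q = (if q < i then w!q else if q = i then e else w!(q - 1))"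
    using nth_degen[OF lw i] by simp
  show "face M (Suc n) j (degen M n i w) ! m = w ! m"
  proof -
    consider "j = i" | "j = Suc i" using j by blast
    then show ?thesis
    proof cases
      case 1
      show ?thesis
      proof (cases "i = 0")
        case True thus ?thesis using F Dg m 1 by simp
      next
        case False
        have er: "P [w ! (i - 1), e] = w ! (i - 1)" using e_right[OF wC[of "i - 1"]] False i by simp
        show ?thesis using F Dg m 1 False i er by auto
      qed
    next
      case 2
      show ?thesis
      proof (cases "i = n")
        case True thus ?thesis using F Dg m 2 by simp
      next
        case False
        have el: "P [e, w ! i] = w ! i" using e_left[OF wC[of i]] False i by simp
        show ?thesis using F Dg m 2 False i el by auto
      qed
    qed
  qed
qed


lemma inn_eta:
  assumes al: "simplicial_aut M \<alpha>" and F: "simplicial_homotopy M F \<alpha> (\<lambda>n w. w)"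
  shows "\<exists>\<eta>\<in>pg_N M. \<forall>x\<in>C. \<alpha> (Suc 0) [x] = [pg_conj M \<eta> x]"
proof -
  have fm: "simplicial_map M \<alpha>" using saut_map[OF al] .
  define \<eta> where "\<eta> = hd (F (Suc 0) [e] 1)"
  have F1e: "F (Suc 0) [e] 1 \<in> simp M (Suc 0)" using sh_simp[OF F single_simp[OF e_C], of 1] by simp
  have eC: "\<eta> \<in> C" using simp1[OF F1e] unfolding \<eta>_def by simp
  have F2: "\<And>x. x \<in> C \<Longrightarrow> F (Suc 0) [x] 2 = \<alpha> (Suc 0) [x]"
    using sh_ends[OF F single_simp] by (simp add: numeral_2_eq_2)
  have F0: "\<And>x. x \<in> C \<Longrightarrow> F (Suc 0) [x] 0 = [x]"
    using sh_ends[OF F single_simp] by simp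
  have sig: "\<And>n w i. w \<in> simp M n \<Longrightarrow> i \<le> n \<Longrightarrow> F (Suc n) (degen M n i w) (Suc i) = om (sa \<alpha>) \<eta> w i"
  proof -
    fix n w i assume w: "w \<in> simp M n" and i: "i \<le> n"
    have lw: "length w = n" and wD: "w \<in> D" using simpD[OF w] by auto
    have wC: "\<And>q. q < n \<Longrightarrow> w ! q \<in> C" using D_lists[OF wD] lw by (meson nth_mem subsetD)
    have ds: "degen M n i w \<in> simp M (Suc n)" using degen_simp[OF w i] .
    have k: "Suc i \<le> Suc (Suc n)" using i by simp
    have lF: "length (F (Suc n) (degen M n i w) (Suc i)) = Suc n" using simpD[OF sh_simp[OF F ds k]] by simp
    show "F (Suc n) (degen M n i w) (Suc i) = om (sa \<alpha>) \<eta> w i"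
    proof (rule nth_equalityI)
      show "length (F (Suc n) (degen M n i w) (Suc i)) = length (om (sa \<alpha>) \<eta> w i)" using lF lw i by simp
      fix j assume "j < length (F (Suc n) (degen M n i w) (Suc i))"
      hence j: "j < Suc n" using lF by simp
      have h: "F (Suc n) (degen M n i w) (Suc i) ! j = hd (F (Suc 0) [degen M n i w ! j] (kk (Suc i) j))"
        using hspine[OF F ds k j] .
      have dg: "degen M n i w ! j = (if j < i then w!j else if j = i then e else w!(j - 1))"
        using nth_degen[OF lw i j] .
      have o: "om (sa \<alpha>) \<eta> w i ! j = (if j < i then sa \<alpha> (w ! j) else if j = i then \<eta> else w ! (j - 1))"
        using om_nth[of i w j] i j lw by simp
      consider "j < i" | "j = i" | "i < j" by linarith
      then show "F (Suc n) (degen M n i w) (Suc i) ! j = om (sa \<alpha>) \<eta> w i ! j"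
      proof cases
        case 1
        have "kk (Suc i) j = 2" using 1 unfolding kk_def by simp
        thus ?thesis using h dg o 1 F2[OF wC[of j]] i unfolding sa_def by simp
      next
        case 2
        have "kk (Suc i) j = 1" using 2 unfolding kk_def by simp
        thus ?thesis using h dg o 2 unfolding \<eta>_def by simp
      next
        case 3
        have "kk (Suc i) j = 0" using 3 unfolding kk_def by simp
        thus ?thesis using h dg o 3 F0[OF wC[of "j - 1"]] j by simp
      qed
    qed
  qed
  have step: "\<And>n w i. w \<in> simp M n \<Longrightarrow> i < n \<Longrightarrow> P (om (sa \<alpha>) \<eta> w i) = P (om (sa \<alpha>) \<eta> w (Suc i))"
  proof -
    fix n w i assume w: "w \<in> simp M n" and i: "i < n"
    have d0: "degen M n i w \<in> simp M (Suc n)" using degen_simp[OF w] i by simp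
    have d1: "degen M n (Suc i) w \<in> simp M (Suc n)" using degen_simp[OF w] i by simp
    have k0: "Suc i \<le> Suc (Suc n)" and k1: "Suc (Suc i) \<le> Suc (Suc n)" using i by auto
    have s0: "F (Suc n) (degen M n i w) (Suc i) \<in> simp M (Suc n)" using sh_simp[OF F d0 k0] .
    have s1: "F (Suc n) (degen M n (Suc i) w) (Suc (Suc i)) \<in> simp M (Suc n)" using sh_simp[OF F d1 k1] .
    have f0: "face M (Suc n) (Suc i) (F (Suc n) (degen M n i w) (Suc i)) = F n w (Suc i)"
      using sh_face[OF F d0 k0, of "Suc i"] i face_degen[OF w, of i "Suc i"] unfolding d1_face_def by simp
    have f1: "face M (Suc n) (Suc i) (F (Suc n) (degen M n (Suc i) w) (Suc (Suc i))) = F n w (Suc i)"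
      using sh_face[OF F d1 k1, of "Suc i"] i face_degen[OF w, of "Suc i" "Suc i"] unfolding d1_face_def by simp
    have "P (F (Suc n) (degen M n i w) (Suc i)) = P (F n w (Suc i))"
      using face_mid_P[OF s0, of "Suc i"] f0 i by simp
    also have "\<dots> = P (F (Suc n) (degen M n (Suc i) w) (Suc (Suc i)))"
      using face_mid_P[OF s1, of "Suc i"] f1 i by simp
    finally show "P (om (sa \<alpha>) \<eta> w i) = P (om (sa \<alpha>) \<eta> w (Suc i))"
      using sig[OF w, of i] sig[OF w, of "Suc i"] i by simp
  qed
  have allP: "\<And>n w i. w \<in> simp M n \<Longrightarrow> i \<le> n \<Longrightarrow> P (om (sa \<alpha>) \<eta> w i) = P (\<eta> # w)"
  proof -
    fix n w i assume w: "w \<in> simp M n" and i: "i \<le> n"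
    show "P (om (sa \<alpha>) \<eta> w i) = P (\<eta> # w)"
      using i
    proof (induction i)
      case 0 thus ?case by simp
    next
      case (Suc i)
      thus ?case using step[OF w, of i] by simp
    qed
  qed
  have r: "\<eta> \<in> pg_N M \<and> (\<forall>x\<in>C. pg_conj M \<eta> x = sa \<alpha> x)"
  proof (rule recog[OF al eC])
    fix w i assume w: "w \<in> D" and i: "i \<le> length w"
    have ws: "w \<in> simp M (length w)" using w by (auto intro: simpI)
    have "om (sa \<alpha>) \<eta> w i \<in> simp M (Suc (length w))"
      using sig[OF ws i] sh_simp[OF F degen_simp[OF ws i], of "Suc i"] i by simp
    thus "om (sa \<alpha>) \<eta> w i \<in> D \<and> P (om (sa \<alpha>) \<eta> w i) = P (\<eta> # w)"
      using simpD allP[OF ws i] by simp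
  qed
  have "\<forall>x\<in>C. \<alpha> (Suc 0) [x] = [pg_conj M \<eta> x]"
  proof
    fix x assume x: "x \<in> C"
    show "\<alpha> (Suc 0) [x] = [pg_conj M \<eta> x]" using sa_single[OF fm x] r x by simp
  qed
  thus ?thesis using r by blast
qed


subsection \<open>The isomorphism\<close>

lemma NG_carrier[simp]: "carrier (N_group M) = pg_N M"
  by (simp add: N_group_def)
lemma NG_mult[simp]: "x \<otimes>\<^bsub>N_group M\<^esub> y = P [x, y]"
  by (simp add: N_group_def)
lemma NG_one[simp]: "\<one>\<^bsub>N_group M\<^esub> = e"
  by (simp add: N_group_def)

lemma NG_group: "group (N_group M)"
proof (rule groupI)
  fix x y assume "x \<in> carrier (N_group M)" "y \<in> carrier (N_group M)"
  thus "x \<otimes>\<^bsub>N_group M\<^esub> y \<in> carrier (N_group M)" using mult_N by simp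
next
  show "\<one>\<^bsub>N_group M\<^esub> \<in> carrier (N_group M)" using one_N by simp
next
  fix x y z assume xyz: "x \<in> carrier (N_group M)" "y \<in> carrier (N_group M)" "z \<in> carrier (N_group M)"
  have 3: "[x, y, z] \<in> D" using N_lists[of "[x, y, z]"] xyz by simp
  have a1: "P [P [x, y], z] = P [x, y, z]" using pair_assoc[OF 3] by (elim conjE)
  have a2: "P [x, P [y, z]] = P [x, y, z]" using pair_assoc[OF 3] by (elim conjE)
  show "x \<otimes>\<^bsub>N_group M\<^esub> y \<otimes>\<^bsub>N_group M\<^esub> z = x \<otimes>\<^bsub>N_group M\<^esub> (y \<otimes>\<^bsub>N_group M\<^esub> z)"
    using a1 a2 by simp
next
  fix x assume "x \<in> carrier (N_group M)"
  hence x: "x \<in> pg_N M" by simp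
  show "\<one>\<^bsub>N_group M\<^esub> \<otimes>\<^bsub>N_group M\<^esub> x = x" using e_left[OF N_C[OF x]] by simp
  have "I x \<in> pg_N M" using inv_N[OF x] by simp
  moreover have "P [I x, x] = e" using inv_l[OF N_C[OF x]] by simp
  ultimately show "\<exists>y\<in>carrier (N_group M). y \<otimes>\<^bsub>N_group M\<^esub> x = \<one>\<^bsub>N_group M\<^esub>" by auto
qed

lemma NG_inv: "x \<in> pg_N M \<Longrightarrow> inv\<^bsub>N_group M\<^esub> x = I x"
proof -
  assume x: "x \<in> pg_N M"
  interpret G: group "N_group M" using NG_group .
  have "I x \<in> pg_N M" using inv_N[OF x] by simp
  moreover have "P [I x, x] = e" using inv_l[OF N_C[OF x]] by simp
  ultimately show ?thesis using G.inv_equality[of "I x" x] x by simp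
qed

lemma Z_normal: "pg_Z M \<lhd> N_group M"
proof -
  interpret G: group "N_group M" using NG_group .
  have ZN: "pg_Z M \<subseteq> pg_N M" unfolding pg_Z_def by auto
  have sg: "subgroup (pg_Z M) (N_group M)"
  proof (rule G.subgroupI)
    show "pg_Z M \<subseteq> carrier (N_group M)" using ZN by simp
    have "e \<in> pg_Z M" using one_N unfolding Z_unfold by simp
    thus "pg_Z M \<noteq> {}" by blast
    fix a assume a: "a \<in> pg_Z M"
    show "inv\<^bsub>N_group M\<^esub> a \<in> pg_Z M" using NG_inv Z_inv a ZN by auto
    fix b assume b: "b \<in> pg_Z M"
    show "a \<otimes>\<^bsub>N_group M\<^esub> b \<in> pg_Z M" using Z_prod[of "[a, b]"] a b by simp
  qed
  show ?thesis unfolding G.normal_inv_iff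
  proof (intro conjI ballI)
    show "subgroup (pg_Z M) (N_group M)" using sg .
    fix x h assume x: "x \<in> carrier (N_group M)" and h: "h \<in> pg_Z M"
    have xN: "x \<in> pg_N M" using x by simp
    have hN: "h \<in> pg_N M" using h ZN by auto
    have xC: "x \<in> C" using N_C[OF xN] .
    have c: "P [x, h] = P [h, x]" using Z_central[OF h xC] by simp
    have 3: "[h, x, I x] \<in> D" using N_lists[of "[h, x, I x]"] hN xN inv_N[OF xN] by simp
    have "P [P [h, x], I x] = P [h, P [x, I x]]" using pair_assoc[OF 3] by (elim conjE) simp
    also have "\<dots> = P [h, e]" using inv_r[OF xC] by simp
    also have "\<dots> = h" using e_right N_C[OF hN] by simp
    finally have "P [P [x, h], I x] = h" using c by simp
    thus "x \<otimes>\<^bsub>N_group M\<^esub> h \<otimes>\<^bsub>N_group M\<^esub> inv\<^bsub>N_group M\<^esub> x \<in> pg_Z M"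
      using NG_inv[OF xN] h by simp
  qed
qed

definition Phi :: "(nat \<Rightarrow> 'a list \<Rightarrow> 'a list) \<Rightarrow> 'a set" where
  "Phi \<alpha> = {\<eta> \<in> pg_N M. \<forall>x\<in>C. \<alpha> (Suc 0) [x] = [pg_conj M \<eta> x]}"

lemma Phi_coset:
  assumes e0: "\<eta>0 \<in> pg_N M" and ae: "\<forall>x\<in>C. \<alpha> (Suc 0) [x] = [pg_conj M \<eta>0 x]"
  shows "Phi \<alpha> = pg_Z M #>\<^bsub>N_group M\<^esub> \<eta>0"
proof
  have ZN: "pg_Z M \<subseteq> pg_N M" unfolding pg_Z_def by auto
  have ie: "I \<eta>0 \<in> pg_N M" "\<forall>x\<in>C. pg_conj M \<eta>0 (pg_conj M (I \<eta>0) x) = x" using inv_N[OF e0] by auto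
  show "Phi \<alpha> \<subseteq> pg_Z M #>\<^bsub>N_group M\<^esub> \<eta>0"
  proof
    fix \<theta> assume th: "\<theta> \<in> Phi \<alpha>"
    have thN: "\<theta> \<in> pg_N M" using th unfolding Phi_def by simp
    have same: "\<And>x. x \<in> C \<Longrightarrow> pg_conj M \<theta> x = pg_conj M \<eta>0 x" using th ae unfolding Phi_def by simp
    define z where "z = P [\<theta>, I \<eta>0]"
    have zN: "z \<in> pg_N M" "\<forall>x\<in>C. pg_conj M z x = pg_conj M \<theta> (pg_conj M (I \<eta>0) x)"
      using mult_N[OF thN ie(1)] unfolding z_def by auto
    have "\<forall>x\<in>C. pg_conj M z x = x"
    proof
      fix x assume x: "x \<in> C"
      have "pg_conj M (I \<eta>0) x \<in> C" using N_conj_C[OF ie(1) x] .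
      thus "pg_conj M z x = x" using zN(2) same ie(2) x by simp
    qed
    hence zZ: "z \<in> pg_Z M" using zN(1) unfolding Z_unfold by simp
    have 3: "[\<theta>, I \<eta>0, \<eta>0] \<in> D" using N_lists[of "[\<theta>, I \<eta>0, \<eta>0]"] thN ie(1) e0 by simp
    have "P [z, \<eta>0] = P [\<theta>, P [I \<eta>0, \<eta>0]]" unfolding z_def using pair_assoc[OF 3] by (elim conjE) simp
    also have "\<dots> = P [\<theta>, e]" using inv_l[OF N_C[OF e0]] by simp
    also have "\<dots> = \<theta>" using e_right[OF N_C[OF thN]] by simp
    finally have "\<theta> = z \<otimes>\<^bsub>N_group M\<^esub> \<eta>0" by simp
    thus "\<theta> \<in> pg_Z M #>\<^bsub>N_group M\<^esub> \<eta>0" unfolding r_coset_def using zZ by blast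
  qed
  show "pg_Z M #>\<^bsub>N_group M\<^esub> \<eta>0 \<subseteq> Phi \<alpha>"
  proof
    fix \<theta> assume "\<theta> \<in> pg_Z M #>\<^bsub>N_group M\<^esub> \<eta>0"
    then obtain z where z: "z \<in> pg_Z M" and th: "\<theta> = P [z, \<eta>0]" unfolding r_coset_def by auto
    have zN: "z \<in> pg_N M" and zc: "\<forall>x\<in>C. pg_conj M z x = x" using z unfolding Z_unfold by auto
    have m: "P [z, \<eta>0] \<in> pg_N M" "\<forall>x\<in>C. pg_conj M (P [z, \<eta>0]) x = pg_conj M z (pg_conj M \<eta>0 x)"
      using mult_N[OF zN e0] by auto
    have "\<forall>x\<in>C. \<alpha> (Suc 0) [x] = [pg_conj M \<theta> x]"
    proof
      fix x assume x: "x \<in> C"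
      have "pg_conj M \<eta>0 x \<in> C" using N_conj_C[OF e0 x] .
      thus "\<alpha> (Suc 0) [x] = [pg_conj M \<theta> x]" using ae m(2) zc x th by simp
    qed
    thus "\<theta> \<in> Phi \<alpha>" unfolding Phi_def using m(1) th by simp
  qed
qed

lemma Inn_carrier: "carrier (Inn M) = {f. inner_aut M f \<and> (\<forall>n w. w \<notin> simp M n \<longrightarrow> f n w = undefined)}"
  by (simp add: Inn_def)
lemma Inn_mult: "\<alpha> \<otimes>\<^bsub>Inn M\<^esub> \<beta> = (\<lambda>n w. if w \<in> simp M n then \<alpha> n (\<beta> n w) else undefined)"
  by (simp add: Inn_def)

lemma Inn_eta: "\<alpha> \<in> carrier (Inn M) \<Longrightarrow> \<exists>\<eta>\<in>pg_N M. \<forall>x\<in>C. \<alpha> (Suc 0) [x] = [pg_conj M \<eta> x]"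
proof -
  assume a: "\<alpha> \<in> carrier (Inn M)"
  have "inner_aut M \<alpha>" using a unfolding Inn_carrier by simp
  then obtain F where "simplicial_aut M \<alpha>" "simplicial_homotopy M F \<alpha> (\<lambda>n w. w)"
    unfolding inner_aut_def by blast
  thus ?thesis using inn_eta by blast
qed

lemma part3: "Phi \<in> iso (Inn M) (N_group M Mod pg_Z M)"
proof -
  interpret G: group "N_group M" using NG_group .
  interpret Zn: normal "pg_Z M" "N_group M" using Z_normal .
  have car: "carrier (N_group M Mod pg_Z M) = rcosets\<^bsub>N_group M\<^esub> pg_Z M" by (simp add: FactGroup_def)
  have mul: "\<And>A B. A \<otimes>\<^bsub>N_group M Mod pg_Z M\<^esub> B = A <#>\<^bsub>N_group M\<^esub> B" by (simp add: FactGroup_def)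
  have inC: "\<And>\<alpha>. \<alpha> \<in> carrier (Inn M) \<Longrightarrow> Phi \<alpha> \<in> rcosets\<^bsub>N_group M\<^esub> pg_Z M"
  proof -
    fix \<alpha> assume a: "\<alpha> \<in> carrier (Inn M)"
    obtain \<eta> where "\<eta> \<in> pg_N M" "\<forall>x\<in>C. \<alpha> (Suc 0) [x] = [pg_conj M \<eta> x]" using Inn_eta[OF a] by blast
    thus "Phi \<alpha> \<in> rcosets\<^bsub>N_group M\<^esub> pg_Z M" using Phi_coset unfolding RCOSETS_def by auto
  qed
  have hom: "Phi \<in> hom (Inn M) (N_group M Mod pg_Z M)"
    unfolding hom_def
  proof (intro CollectI conjI ballI)
    show "Phi \<in> carrier (Inn M) \<rightarrow> carrier (N_group M Mod pg_Z M)" using inC car by auto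
    fix \<alpha> \<beta> assume a: "\<alpha> \<in> carrier (Inn M)" and b: "\<beta> \<in> carrier (Inn M)"
    obtain \<eta> where eta: "\<eta> \<in> pg_N M" "\<forall>x\<in>C. \<alpha> (Suc 0) [x] = [pg_conj M \<eta> x]" using Inn_eta[OF a] by blast
    obtain \<theta> where th: "\<theta> \<in> pg_N M" "\<forall>x\<in>C. \<beta> (Suc 0) [x] = [pg_conj M \<theta> x]" using Inn_eta[OF b] by blast
    have m: "P [\<eta>, \<theta>] \<in> pg_N M" "\<forall>x\<in>C. pg_conj M (P [\<eta>, \<theta>]) x = pg_conj M \<eta> (pg_conj M \<theta> x)"
      using mult_N[OF eta(1) th(1)] by auto
    have ab: "\<forall>x\<in>C. (\<alpha> \<otimes>\<^bsub>Inn M\<^esub> \<beta>) (Suc 0) [x] = [pg_conj M (P [\<eta>, \<theta>]) x]"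
    proof
      fix x assume x: "x \<in> C"
      have "pg_conj M \<theta> x \<in> C" using N_conj_C[OF th(1) x] .
      thus "(\<alpha> \<otimes>\<^bsub>Inn M\<^esub> \<beta>) (Suc 0) [x] = [pg_conj M (P [\<eta>, \<theta>]) x]"
        unfolding Inn_mult using single_simp[OF x] eta(2) th(2) m(2) x by simp
    qed
    have "Phi (\<alpha> \<otimes>\<^bsub>Inn M\<^esub> \<beta>) = pg_Z M #>\<^bsub>N_group M\<^esub> (P [\<eta>, \<theta>])" using Phi_coset[of "P [\<eta>, \<theta>]" "\<alpha> \<otimes>\<^bsub>Inn M\<^esub> \<beta>", OF m(1) ab] .
    also have "\<dots> = (pg_Z M #>\<^bsub>N_group M\<^esub> \<eta>) <#>\<^bsub>N_group M\<^esub> (pg_Z M #>\<^bsub>N_group M\<^esub> \<theta>)"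
      using Zn.rcos_sum[of \<eta> \<theta>] eta(1) th(1) by simp
    also have "\<dots> = Phi \<alpha> \<otimes>\<^bsub>N_group M Mod pg_Z M\<^esub> Phi \<beta>"
      using Phi_coset[of \<eta> \<alpha>, OF eta] Phi_coset[of \<theta> \<beta>, OF th] mul by simp
    finally show "Phi (\<alpha> \<otimes>\<^bsub>Inn M\<^esub> \<beta>) = Phi \<alpha> \<otimes>\<^bsub>N_group M Mod pg_Z M\<^esub> Phi \<beta>" .
  qed
  have inj: "inj_on Phi (carrier (Inn M))"
  proof (rule inj_onI)
    fix \<alpha> \<beta> assume a: "\<alpha> \<in> carrier (Inn M)" and b: "\<beta> \<in> carrier (Inn M)" and eq: "Phi \<alpha> = Phi \<beta>"
    obtain \<eta> where eta: "\<eta> \<in> pg_N M" "\<forall>x\<in>C. \<alpha> (Suc 0) [x] = [pg_conj M \<eta> x]" using Inn_eta[OF a] by blast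
    have "\<eta> \<in> Phi \<alpha>" unfolding Phi_def using eta by simp
    hence "\<eta> \<in> Phi \<beta>" using eq by simp
    hence bt: "\<forall>x\<in>C. \<beta> (Suc 0) [x] = [pg_conj M \<eta> x]" unfolding Phi_def by simp
    have ia: "inner_aut M \<alpha>" "\<forall>n w. w \<notin> simp M n \<longrightarrow> \<alpha> n w = undefined" using a unfolding Inn_carrier by auto
    have ib: "inner_aut M \<beta>" "\<forall>n w. w \<notin> simp M n \<longrightarrow> \<beta> n w = undefined" using b unfolding Inn_carrier by auto
    have fa: "simplicial_map M \<alpha>" using ia(1) saut_map unfolding inner_aut_def by blast
    have fb: "simplicial_map M \<beta>" using ib(1) saut_map unfolding inner_aut_def by blast
    show "\<alpha> = \<beta>"
    proof (intro ext)
      fix n w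
      show "\<alpha> n w = \<beta> n w"
      proof (cases "w \<in> simp M n")
        case True
        have "map (sa \<alpha>) w = map (sa \<beta>) w"
        proof (rule map_cong[OF refl])
          fix x assume "x \<in> set w"
          hence x: "x \<in> C" using D_lists simpD[OF True] by (meson subsetD)
          show "sa \<alpha> x = sa \<beta> x" unfolding sa_def using eta(2) bt x by simp
        qed
        thus ?thesis using spine[OF fa True] spine[OF fb True] by simp
      next
        case False thus ?thesis using ia(2) ib(2) by simp
      qed
    qed
  qed
  have img: "Phi ` carrier (Inn M) = carrier (N_group M Mod pg_Z M)"
  proof
    show "Phi ` carrier (Inn M) \<subseteq> carrier (N_group M Mod pg_Z M)" using inC car by auto
    show "carrier (N_group M Mod pg_Z M) \<subseteq> Phi ` carrier (Inn M)"
    proof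
      fix R assume "R \<in> carrier (N_group M Mod pg_Z M)"
      then obtain \<eta> where eta: "\<eta> \<in> pg_N M" and R: "R = pg_Z M #>\<^bsub>N_group M\<^esub> \<eta>"
        unfolding car RCOSETS_def by auto
      have c: "cn \<eta> \<in> carrier (Inn M)" "\<forall>x\<in>C. cn \<eta> (Suc 0) [x] = [pg_conj M \<eta> x]" using cn_Inn[OF eta] by auto
      have "Phi (cn \<eta>) = R" using Phi_coset[of \<eta> "cn \<eta>", OF eta c(2)] R by simp
      thus "R \<in> Phi ` carrier (Inn M)" using c(1) by blast
    qed
  qed
  show ?thesis unfolding iso_def bij_betw_def using hom inj img by simp
qed

end

theorem lemma5p7:
  fixes M :: "'a partial_group"
  assumes "partial_group M"
  shows "pg_subgroup M (pg_N M) \<and>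
         (pg_subgroup M (pg_Z M) \<and>
          (\<forall>x\<in>pg_Z M. \<forall>y\<in>pg_Z M. pg_prod M [x, y] = pg_prod M [y, x])) \<and>
         Inn M \<cong> (N_group M Mod pg_Z M)"
proof -
  interpret pgrp M using assms by (rule pgrp.intro)
  show ?thesis using part1 part2 is_isoI[OF part3] by simp
qed

end
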